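(* Let $m,n\ge 1$, $k=\min(m,n)$, and let $M^\star\in\mathbb{R}^{m\times n}$ have singular value decomposition $M^\star=P\Sigma Q^\top$ with $P\in\mathbb{R}^{m\times k}$, $Q\in\mathbb{R}^{n\times k}$ having orthonormal columns $p_i,q_i$ and $\Sigma=\mathrm{diag}(\sigma_1,\dots,\sigma_k)$ with $\sigma_1>\sigma_2>\cdots>\sigma_k>0$. For $r\in\{1,\dots,k\}$ let $A_r=\sum_{i=1}^r\sigma_ip_iq_i^\top$, and for $U\in\mathbb{R}^{m\times k}$, $V\in\mathbb{R}^{n\times k}$ let $$\mathcal{E}(U,V,r)=\min_{S_r\subseteq\{1,\dots,k\},\,|S_r|=r}\bigl\|U\Pi_{S_r}V^\top-A_r\bigr\|_F^2,$$ where $\Pi_S$ is the $k\times k$ diagonal matrix with $(\Pi_S)_{ii}=1$ if $i\in S$ and $0$ otherwise. Let $(U,V)$ be any minimizer of $$\frac{1}{2^k-1}\sum_{\emptyset\neq S\subseteq\{1,\dots,k\}}\bigl\|U\Pi_SV^\top-M^\star\bigr\|_F^2,$$ and let $\lambda=\frac1k\|UV^\top\|_\star$. Then for every $r\in\{1,\dots,k\}$, $$\mathcal{E}(U,V,r)\ge\frac1k\Bigl(r\lambda-\sum_{i=1}^r\sigma_i\Bigr)^2.$$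
   Context: $\|\cdot\|_F$ is the Frobenius norm and $\|\cdot\|_\star$ the nuclear norm (sum of singular values). *)

theory Defs
  imports "Jordan_Normal_Form.Char_Poly"
begin

definition frob_sq :: "real mat \<Rightarrow> real" where
  "frob_sq A = (\<Sum>i<dim_row A. \<Sum>j<dim_col A. (A $$ (i,j))^2)"

(* nuclear norm: sum of the singular values, i.e. of the square roots of the
   eigenvalues of A^T A counted with algebraic multiplicity *)
definition nuclear_norm :: "real mat \<Rightarrow> real" where
  "nuclear_norm A =
     (let p = char_poly (transpose_mat A * A) in
      \<Sum>x\<in>{x. poly p x = 0}. of_nat (order x p) * sqrt x)"

definition Pi_sel :: "nat \<Rightarrow> nat set \<Rightarrow> real mat" where
  "Pi_sel k S = mat k k (\<lambda>(i,j). if i = j \<and> i \<in> S then 1 else 0)"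

definition diag_of :: "nat \<Rightarrow> (nat \<Rightarrow> real) \<Rightarrow> real mat" where
  "diag_of k \<sigma> = mat k k (\<lambda>(i,j). if i = j then \<sigma> i else 0)"

(* A_r = sum_{i<r} sigma_i p_i q_i^T  (0-indexed) *)
definition trunc_approx :: "real mat \<Rightarrow> real mat \<Rightarrow> (nat \<Rightarrow> real) \<Rightarrow> nat \<Rightarrow> real mat" where
  "trunc_approx P Q \<sigma> r =
     mat (dim_row P) (dim_row Q) (\<lambda>(i,j). \<Sum>l<r. \<sigma> l * P $$ (i,l) * Q $$ (j,l))"

definition dropout_loss :: "nat \<Rightarrow> real mat \<Rightarrow> real mat \<Rightarrow> real mat \<Rightarrow> real" where
  "dropout_loss k M U V =
     (1 / (2 ^ k - 1)) * (\<Sum>S\<in>Pow {0..<k} - {{}}. frob_sq (U * Pi_sel k S * transpose_mat V - M))"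

definition err_E :: "nat \<Rightarrow> real mat \<Rightarrow> real mat \<Rightarrow> real mat \<Rightarrow> nat \<Rightarrow> real" where
  "err_E k U V A r =
     Min {frob_sq (U * Pi_sel k S * transpose_mat V - A) | S. S \<subseteq> {0..<k} \<and> card S = r}"

end

theory Submission
  imports Defs
begin

lemma sym_eigvec_complex_real:
  fixes A :: "real mat"
  assumes A: "A \<in> carrier_mat n n" and sym: "transpose_mat A = A" and n: "n > 0"
  shows "\<exists>\<mu>. poly (char_poly A) \<mu> = 0"
proof -
  let ?Ac = "map_mat complex_of_real A"
  have Ac: "?Ac \<in> carrier_mat n n" using A by simp
  obtain as where cp: "char_poly ?Ac = (\<Prod>a\<leftarrow>as. [:- a, 1:])" and len: "length as = n"
    using char_poly_factorized[OF Ac] by blast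
  from len n obtain a as' where as: "as = a # as'" by (cases as) auto
  have "poly (char_poly ?Ac) a = 0" unfolding cp as by simp
  hence ev: "eigenvalue ?Ac a" using eigenvalue_root_char_poly[OF Ac] by simp
  define w where "w = find_eigenvector ?Ac a"
  have "eigenvector ?Ac w a" using find_eigenvector[OF Ac ev] w_def by simp
  hence w: "w \<in> carrier_vec n" and w0: "w \<noteq> 0\<^sub>v n" and eig: "?Ac *\<^sub>v w = a \<cdot>\<^sub>v w"
    unfolding eigenvector_def using A by auto
  define s where "s = (\<Sum>i<n. cnj (w$i) * (\<Sum>j<n. complex_of_real (A$$(i,j)) * w$j))"
  define r where "r = (\<Sum>i<n. (cmod (w$i))^2)"
  have comp: "(\<Sum>j<n. complex_of_real (A$$(i,j)) * w$j) = a * w$i" if "i < n" for i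
  proof -
    have "(?Ac *\<^sub>v w) $ i = a * w $ i" using eig that w by simp
    moreover have "(?Ac *\<^sub>v w) $ i = (\<Sum>j<n. complex_of_real (A$$(i,j)) * w$j)"
      using that A w by (simp add: scalar_prod_def row_def atLeast0LessThan)
    ultimately show ?thesis by simp
  qed
  have s1: "s = a * of_real r"
  proof -
    have "s = (\<Sum>i<n. a * (cnj (w$i) * w$i))" unfolding s_def
      by (rule sum.cong, simp, subst comp, auto simp: algebra_simps)
    also have "\<dots> = a * (\<Sum>i<n. cnj (w$i) * w$i)" by (simp add: sum_distrib_left)
    also have "(\<Sum>i<n. cnj (w$i) * w$i) = of_real r" unfolding r_def of_real_sum
      by (rule sum.cong, simp, simp add: complex_norm_square[symmetric] mult.commute)
    finally show ?thesis .
  qed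
  have symA: "A$$(i,j) = A$$(j,i)" if "i<n" "j<n" for i j
    using arg_cong[OF sym, of "\<lambda>M. M$$(j,i)"] that A by auto
  have s2: "cnj s = s"
  proof -
    have "cnj s = (\<Sum>i<n. \<Sum>j<n. w$i * (complex_of_real (A$$(i,j)) * cnj (w$j)))"
      unfolding s_def by (simp add: sum_distrib_left)
    also have "\<dots> = (\<Sum>j<n. \<Sum>i<n. w$i * (complex_of_real (A$$(i,j)) * cnj (w$j)))"
      by (rule sum.swap)
    also have "\<dots> = s" unfolding s_def
      by (rule sum.cong, simp, subst sum_distrib_left, rule sum.cong, simp, simp add: symA)
    finally show ?thesis .
  qed
  have rpos: "r > 0"
  proof -
    from w0 w obtain i where i: "i < n" "w$i \<noteq> 0" by (auto simp: vec_eq_iff)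
    have "r \<ge> (cmod (w$i))^2" unfolding r_def
      by (rule member_le_sum, insert i, auto)
    moreover have "(cmod (w$i))^2 > 0" using i by simp
    ultimately show ?thesis by linarith
  qed
  have "cnj a * of_real r = a * of_real r" using s1 s2 by (metis complex_cnj_complex_of_real complex_cnj_mult)
  hence "cnj a = a" using rpos by simp
  hence areal: "a = of_real (Re a)" by (metis Reals_cnj_iff complex_is_Real_iff of_real_Re)
  have "char_poly ?Ac = map_poly of_real (char_poly A)" using of_real_hom.char_poly_hom[OF A] by simp
  hence "poly (map_poly complex_of_real (char_poly A)) (of_real (Re a)) = 0"
    using \<open>poly (char_poly ?Ac) a = 0\<close> areal by simp
  hence "poly (char_poly A) (Re a) = 0" by (simp add: of_real_hom.poly_map_poly)
  thus ?thesis by blast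
qed

lemma householder:
  fixes v :: "real vec"
  assumes v: "v \<in> carrier_vec N" and N: "N > 0" and unit: "v \<bullet> v = 1"
  shows "\<exists>H. H \<in> carrier_mat N N \<and> transpose_mat H = H \<and> H * H = 1\<^sub>m N \<and> col H 0 = v"
proof (cases "v$0 = 1")
  case True
  have ss: "(\<Sum>i<N. (v$i)^2) = 1" using unit v by (simp add: scalar_prod_def atLeast0LessThan power2_eq_square)
  have "(\<Sum>i<N. (v$i)^2) = (v$0)^2 + (\<Sum>i\<in>{..<N}-{0}. (v$i)^2)"
    using N by (subst sum.remove[of _ 0], auto)
  hence z: "(\<Sum>i\<in>{..<N}-{0}. (v$i)^2) = 0" using ss True by simp
  have "v$i = 0" if "i < N" "i \<noteq> 0" for i
    using sum_nonneg_eq_0_iff[THEN iffD1, OF _ _ z] that by auto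
  hence "col (1\<^sub>m N) 0 = v" using v N True by (auto intro!: eq_vecI)
  thus ?thesis by (intro exI[of _ "1\<^sub>m N"], auto)
next
  case False
  define c where "c = 1 / (1 - v$0)"
  define w where "w = (\<lambda>i. v$i - (if i = 0 then 1 else 0))"
  define H where "H = mat N N (\<lambda>(i,j). (if i = j then 1 else 0) - c * w i * w j)"
  have ss: "(\<Sum>i<N. (v$i)^2) = 1" using unit v by (simp add: scalar_prod_def atLeast0LessThan power2_eq_square)
  have ww: "(\<Sum>l<N. w l * w l) = 2 - 2 * v$0"
  proof -
    have "(\<Sum>l<N. w l * w l) = (\<Sum>l<N. (v$l)^2 - 2 * (if l = 0 then v$l else 0) + (if l = 0 then 1 else 0))"
      unfolding w_def by (rule sum.cong, auto simp: power2_eq_square algebra_simps)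
    also have "\<dots> = 1 - 2 * v$0 + 1" using N ss
      by (simp add: sum.distrib sum_subtractf sum_distrib_left[symmetric])
    finally show ?thesis by simp
  qed
  have cw: "c * (\<Sum>l<N. w l * w l) = 2" unfolding ww c_def using False by (simp add: field_simps)
  have Hc: "H \<in> carrier_mat N N" unfolding H_def by simp
  have HT: "transpose_mat H = H" unfolding H_def by (rule eq_matI, auto)
  have HH: "H * H = 1\<^sub>m N"
  proof (rule eq_matI)
    fix i j assume i: "i < dim_row (1\<^sub>m N)" and j: "j < dim_col (1\<^sub>m N)"
    hence i: "i < N" and j: "j < N" by auto
    have "(H * H) $$ (i,j) = (\<Sum>l<N. ((if i = l then 1 else 0) - c * w i * w l) * ((if l = j then 1 else 0) - c * w l * w j))"
      using i j unfolding H_def by (simp add: scalar_prod_def row_def col_def atLeast0LessThan)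
    also have "\<dots> = (\<Sum>l<N. (if i = l then 1 else 0) * (if l = j then 1 else 0))
       - (\<Sum>l<N. (if i = l then 1 else 0) * (c * w l * w j))
       - (\<Sum>l<N. (if l = j then 1 else 0) * (c * w i * w l))
       + c * c * w i * w j * (\<Sum>l<N. w l * w l)"
      by (simp add: algebra_simps sum.distrib sum_subtractf sum_distrib_left)
    also have "\<dots> = (if i = j then 1 else 0) - c * w i * w j - c * w i * w j + c * w i * w j * (c * (\<Sum>l<N. w l * w l))"
      using i j by (simp add: if_distrib[of "\<lambda>x. x * _"] cong: if_cong)
    also have "\<dots> = (if i = j then 1 else 0)" unfolding cw by simp
    finally show "(H * H) $$ (i,j) = 1\<^sub>m N $$ (i,j)" using i j by simp
  qed (auto simp: H_def)
  have col: "col H 0 = v"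
  proof (rule eq_vecI)
    fix i assume "i < dim_vec v"
    hence i: "i < N" using v by auto
    have "col H 0 $ i = (if i = 0 then 1 else 0) - c * w i * w 0" unfolding H_def using i N by simp
    also have "\<dots> = v $ i" unfolding c_def w_def using False by (auto simp: field_simps)
    finally show "col H 0 $ i = v $ i" .
  qed (insert v Hc, auto)
  show ?thesis using Hc HT HH col by blast
qed

lemma sym_unit_eigvec:
  fixes A :: "real mat"
  assumes A: "A \<in> carrier_mat n n" and sym: "transpose_mat A = A" and n: "n > 0"
  shows "\<exists>\<mu> v. v \<in> carrier_vec n \<and> v \<bullet> v = 1 \<and> A *\<^sub>v v = \<mu> \<cdot>\<^sub>v v"
proof -
  obtain \<mu> where "poly (char_poly A) \<mu> = 0" using sym_eigvec_complex_real[OF A sym n] by blast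
  hence ev: "eigenvalue A \<mu>" using eigenvalue_root_char_poly[OF A] by simp
  define u where "u = find_eigenvector A \<mu>"
  have "eigenvector A u \<mu>" using find_eigenvector[OF A ev] u_def by simp
  hence u: "u \<in> carrier_vec n" and u0: "u \<noteq> 0\<^sub>v n" and eig: "A *\<^sub>v u = \<mu> \<cdot>\<^sub>v u"
    unfolding eigenvector_def using A by auto
  have uu: "u \<bullet> u > 0"
  proof -
    from u0 u obtain i where i: "i < n" "u$i \<noteq> 0" by (auto simp: vec_eq_iff)
    have "u \<bullet> u = (\<Sum>j<n. (u$j)^2)" using u by (simp add: scalar_prod_def atLeast0LessThan power2_eq_square)
    also have "\<dots> \<ge> (u$i)^2" by (rule member_le_sum, insert i, auto)
    finally show ?thesis using i(2) by (smt (verit) not_sum_power2_lt_zero zero_less_power2) 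
  qed
  define v where "v = (1 / sqrt (u \<bullet> u)) \<cdot>\<^sub>v u"
  have vc: "v \<in> carrier_vec n" unfolding v_def using u by simp
  have "v \<bullet> v = (1 / sqrt (u \<bullet> u))^2 * (u \<bullet> u)" unfolding v_def using u
    by (simp add: power2_eq_square)
  also have "\<dots> = 1" using uu by (simp add: power_divide)
  finally have vv: "v \<bullet> v = 1" .
  have "A *\<^sub>v v = \<mu> \<cdot>\<^sub>v v" unfolding v_def using A u eig
    by (simp add: mult_mat_vec smult_smult_assoc mult.commute)
  thus ?thesis using vc vv by blast
qed

theorem spectral_real_sym:
  fixes A :: "real mat"
  assumes "A \<in> carrier_mat n n" and "transpose_mat A = A"
  shows "\<exists>Ot. Ot \<in> carrier_mat n n \<and> transpose_mat Ot * Ot = 1\<^sub>m n \<and> diagonal_mat (transpose_mat Ot * A * Ot)"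
  using assms
proof (induction n arbitrary: A)
  case 0
  thus ?case by (intro exI[of _ "1\<^sub>m 0"], auto simp: diagonal_mat_def)
next
  case (Suc n A)
  have A: "A \<in> carrier_mat (Suc n) (Suc n)" and sym: "transpose_mat A = A" using Suc by auto
  obtain \<mu> v where v: "v \<in> carrier_vec (Suc n)" and vv: "v \<bullet> v = 1" and eig: "A *\<^sub>v v = \<mu> \<cdot>\<^sub>v v"
    using sym_unit_eigvec[OF A sym] by blast
  obtain H where H: "H \<in> carrier_mat (Suc n) (Suc n)" and HT: "transpose_mat H = H"
    and HH: "H * H = 1\<^sub>m (Suc n)" and Hv: "col H 0 = v"
    using householder[OF v _ vv] by blast
  define A' where "A' = H * A * H"
  have A'c: "A' \<in> carrier_mat (Suc n) (Suc n)" unfolding A'_def using H A by simp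
  have A'T: "transpose_mat A' = A'" unfolding A'_def
  proof -
    have HA: "H * A \<in> carrier_mat (Suc n) (Suc n)" using H A by simp
    have "transpose_mat (H * A * H) = transpose_mat H * transpose_mat (H * A)"
      by (rule transpose_mult[OF HA H])
    also have "transpose_mat (H * A) = transpose_mat A * transpose_mat H"
      by (rule transpose_mult[OF H A])
    finally show "transpose_mat (H * A * H) = H * A * H" using H A HT sym
      by (simp add: assoc_mult_mat[of _ "Suc n" "Suc n" _ "Suc n" _ "Suc n"])
  qed
  have Hv2: "H *\<^sub>v v = unit_vec (Suc n) 0"
  proof -
    have "col (H * H) 0 = H *\<^sub>v col H 0" by (rule col_mult2[OF H H], simp)
    hence "H *\<^sub>v v = col (H * H) 0" unfolding Hv by simp
    also have "\<dots> = unit_vec (Suc n) 0" unfolding HH by simp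
    finally show ?thesis .
  qed
  have colA': "col A' 0 = \<mu> \<cdot>\<^sub>v unit_vec (Suc n) 0"
  proof -
    have "col A' 0 = H *\<^sub>v (A *\<^sub>v col H 0)"
    proof -
      have AH: "A * H \<in> carrier_mat (Suc n) (Suc n)" using A H by simp
      have "A' = H * (A * H)" unfolding A'_def using H A by (simp add: assoc_mult_mat[of _ "Suc n" "Suc n" _ "Suc n" _ "Suc n"])
      hence "col A' 0 = H *\<^sub>v col (A * H) 0" using col_mult2[OF H AH, of 0] by simp
      also have "col (A * H) 0 = A *\<^sub>v col H 0" using col_mult2[OF A H, of 0] by simp
      finally show ?thesis .
    qed
    also have "\<dots> = \<mu> \<cdot>\<^sub>v (H *\<^sub>v v)" unfolding Hv eig using H v by (simp add: mult_mat_vec)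
    finally show ?thesis unfolding Hv2 .
  qed
  have A'i0: "A' $$ (i,0) = (if i = 0 then \<mu> else 0)" if "i < Suc n" for i
    using arg_cong[OF colA', of "\<lambda>x. x $ i"] that A'c by auto
  have A'0j: "A' $$ (0,j) = (if j = 0 then \<mu> else 0)" if "j < Suc n" for j
    using arg_cong[OF A'T, of "\<lambda>M. M $$ (j,0)"] A'i0[OF that] that A'c by auto
  define A3 where "A3 = mat n n (\<lambda>(i,j). A' $$ (Suc i, Suc j))"
  have A3c: "A3 \<in> carrier_mat n n" unfolding A3_def by simp
  have A3T: "transpose_mat A3 = A3" unfolding A3_def
  proof (rule eq_matI)
    fix i j assume "i < dim_row (mat n n (\<lambda>(i, j). A' $$ (Suc i, Suc j)))" "j < dim_col (mat n n (\<lambda>(i, j). A' $$ (Suc i, Suc j)))"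
    thus "transpose_mat (mat n n (\<lambda>(i, j). A' $$ (Suc i, Suc j))) $$ (i, j) = mat n n (\<lambda>(i, j). A' $$ (Suc i, Suc j)) $$ (i, j)"
      using arg_cong[OF A'T, of "\<lambda>M. M $$ (Suc i, Suc j)"] A'c by auto
  qed auto
  obtain O3 where O3: "O3 \<in> carrier_mat n n" and O3O: "transpose_mat O3 * O3 = 1\<^sub>m n"
    and O3D: "diagonal_mat (transpose_mat O3 * A3 * O3)"
    using Suc.IH[OF A3c A3T] by blast
  define F where "F = four_block_mat (1\<^sub>m 1) (0\<^sub>m 1 n) (0\<^sub>m n 1) O3"
  have Fc: "F \<in> carrier_mat (Suc n) (Suc n)" unfolding F_def using O3 by auto
  have FT: "transpose_mat F = four_block_mat (1\<^sub>m 1) (0\<^sub>m 1 n) (0\<^sub>m n 1) (transpose_mat O3)"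
    unfolding F_def using O3 by (subst transpose_four_block_mat, auto)
  define M1 :: "real mat" where "M1 = mat 1 1 (\<lambda>_. \<mu>)"
  have A'b: "A' = four_block_mat M1 (0\<^sub>m 1 n) (0\<^sub>m n 1) A3"
  proof (rule eq_matI)
    fix i j assume i: "i < dim_row (four_block_mat M1 (0\<^sub>m 1 n) (0\<^sub>m n 1) A3)"
      and j: "j < dim_col (four_block_mat M1 (0\<^sub>m 1 n) (0\<^sub>m n 1) A3)"
    hence i: "i < Suc n" and j: "j < Suc n" unfolding M1_def A3_def by auto
    show "A' $$ (i, j) = four_block_mat M1 (0\<^sub>m 1 n) (0\<^sub>m n 1) A3 $$ (i, j)"
      using i j A'i0 A'0j unfolding M1_def A3_def
      by (cases i; cases j; auto)
  qed (insert A'c, auto simp: M1_def A3_def)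
  define Ot where "Ot = H * F"
  have Oc: "Ot \<in> carrier_mat (Suc n) (Suc n)" unfolding Ot_def using H Fc by simp
  have OT: "transpose_mat Ot = transpose_mat F * H" unfolding Ot_def using H Fc
    by (simp add: transpose_mult[of _ "Suc n" "Suc n"] HT)
  have "transpose_mat Ot * Ot = transpose_mat F * (H * H) * F"
    apply (subst OT) unfolding Ot_def using H Fc by (simp add: assoc_mult_mat[of _ "Suc n" "Suc n" _ "Suc n" _ "Suc n"])
  also have "\<dots> = transpose_mat F * F" unfolding HH using Fc by simp
  also have "\<dots> = four_block_mat (1\<^sub>m 1) (0\<^sub>m 1 n) (0\<^sub>m n 1) (1\<^sub>m n)"
    unfolding FT unfolding F_def using O3 O3O by (subst mult_four_block_mat[of _ 1 1 _ n _ n _ _ 1 _ n], auto)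
  also have "\<dots> = 1\<^sub>m (Suc n)" by simp
  finally have OO: "transpose_mat Ot * Ot = 1\<^sub>m (Suc n)" .
  have "transpose_mat Ot * A * Ot = transpose_mat F * A' * F"
    apply (subst OT) unfolding Ot_def A'_def using H Fc A by (simp add: assoc_mult_mat[of _ "Suc n" "Suc n" _ "Suc n" _ "Suc n"])
  also have "\<dots> = four_block_mat M1 (0\<^sub>m 1 n) (0\<^sub>m n 1) (transpose_mat O3 * A3 * O3)"
    unfolding FT unfolding F_def A'b using O3 A3c
    apply (subst mult_four_block_mat[of _ 1 1 _ n _ n _ _ 1 _ n], auto simp: M1_def)
    apply (subst mult_four_block_mat[of _ 1 1 _ n _ n _ _ 1 _ n], auto)
    done
  finally have D: "transpose_mat Ot * A * Ot = four_block_mat M1 (0\<^sub>m 1 n) (0\<^sub>m n 1) (transpose_mat O3 * A3 * O3)" .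
  have "diagonal_mat (transpose_mat Ot * A * Ot)" unfolding D diagonal_mat_def
  proof (intro allI impI)
    fix i j assume i: "i < dim_row (four_block_mat M1 (0\<^sub>m 1 n) (0\<^sub>m n 1) (transpose_mat O3 * A3 * O3))"
      and j: "j < dim_col (four_block_mat M1 (0\<^sub>m 1 n) (0\<^sub>m n 1) (transpose_mat O3 * A3 * O3))"
      and ij: "i \<noteq> j"
    from i j have i: "i < Suc n" and j: "j < Suc n" using O3 A3c by (auto simp: M1_def)
    show "four_block_mat M1 (0\<^sub>m 1 n) (0\<^sub>m n 1) (transpose_mat O3 * A3 * O3) $$ (i, j) = 0"
      using i j ij O3D O3 A3c unfolding diagonal_mat_def M1_def
      by (cases i; cases j; auto)
  qed
  thus ?case using Oc OO by blast
qed

lemma root_order_sum: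
  fixes ds :: "real list"
  shows "(\<Sum>x\<in>{x. poly (\<Prod>a\<leftarrow>ds. [:- a, 1:]) x = 0}. of_nat (order x (\<Prod>a\<leftarrow>ds. [:- a, 1:])) * f x)
         = sum_list (map f ds)"
proof (induction ds)
  case Nil
  thus ?case by simp
next
  case (Cons a ds)
  let ?p = "\<Prod>a\<leftarrow>ds. [:- a, 1:]"
  have p0: "?p \<noteq> 0" by (subst prod_list_zero_iff, auto)
  have lin0: "[:- a, 1:] \<noteq> 0" by simp
  have R: "{x. poly (\<Prod>a\<leftarrow>a#ds. [:- a, 1:]) x = 0} = insert a {x. poly ?p x = 0}" by auto
  have fin: "finite {x. poly ?p x = 0}" using poly_roots_finite[OF p0] .
  have ord: "order x (\<Prod>a\<leftarrow>a#ds. [:- a, 1:]) = (if x = a then 1 else 0) + order x ?p" for x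
  proof -
    have "order x ([:- a, 1:] * ?p) = order x [:- a, 1:] + order x ?p"
      using p0 lin0 by (intro order_mult, simp only: mult_eq_0_iff, blast)
    hence "order x (\<Prod>a\<leftarrow>a#ds. [:- a, 1:]) = order x [:- a, 1:] + order x ?p"
      by (simp only: prod_list.Cons list.map)
    moreover have "order x [:- a, 1:] = (if x = a then 1 else 0)"
      by (simp add: order_linear')
    ultimately show ?thesis by simp
  qed
  have "(\<Sum>x\<in>insert a {x. poly ?p x = 0}. of_nat (order x (\<Prod>a\<leftarrow>a#ds. [:- a, 1:])) * f x)
     = (\<Sum>x\<in>insert a {x. poly ?p x = 0}. (if x = a then f x else 0) + of_nat (order x ?p) * f x)"
    by (rule sum.cong, simp, subst ord, simp add: algebra_simps)
  also have "\<dots> = f a + (\<Sum>x\<in>insert a {x. poly ?p x = 0}. of_nat (order x ?p) * f x)"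
    using fin by (simp add: sum.distrib)
  also have "(\<Sum>x\<in>insert a {x. poly ?p x = 0}. of_nat (order x ?p) * f x) = (\<Sum>x\<in>{x. poly ?p x = 0}. of_nat (order x ?p) * f x)"
  proof (cases "poly ?p a = 0")
    case True thus ?thesis by (simp add: insert_absorb)
  next
    case False
    hence "order a ?p = 0" by (simp add: order_0I)
    thus ?thesis using fin False by simp
  qed
  finally show ?case unfolding R using Cons.IH by simp
qed

lemma nuclear_norm_eig:
  fixes X Ot :: "real mat"
  assumes X: "X \<in> carrier_mat m n" and Ot: "Ot \<in> carrier_mat n n"
    and OO: "transpose_mat Ot * Ot = 1\<^sub>m n"
    and D: "diagonal_mat (transpose_mat Ot * (transpose_mat X * X) * Ot)"
  shows "nuclear_norm X = (\<Sum>j<n. sqrt ((transpose_mat Ot * (transpose_mat X * X) * Ot) $$ (j,j)))"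
proof -
  define G where "G = transpose_mat X * X"
  define Dm where "Dm = transpose_mat Ot * G * Ot"
  have G: "G \<in> carrier_mat n n" unfolding G_def using X by simp
  have Dm: "Dm \<in> carrier_mat n n" unfolding Dm_def using G Ot by simp
  have OO': "Ot * transpose_mat Ot = 1\<^sub>m n"
    using mat_mult_left_right_inverse[OF _ Ot OO] Ot by simp
  have "Ot * Dm * transpose_mat Ot = (Ot * transpose_mat Ot) * G * (Ot * transpose_mat Ot)"
    unfolding Dm_def using Ot G by (simp add: assoc_mult_mat[of _ n n _ n _ n])
  also have "\<dots> = G" unfolding OO' using G by simp
  finally have GD: "G = Ot * Dm * transpose_mat Ot" by simp
  have sim: "similar_mat G Dm" unfolding similar_mat_def similar_mat_wit_def
    by (rule exI[of _ Ot], rule exI[of _ "transpose_mat Ot"], insert GD G Dm Ot OO OO', auto simp: Let_def)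
  have ut: "upper_triangular Dm" using D unfolding Dm_def G_def diagonal_mat_def upper_triangular_def by auto
  have cp: "char_poly G = (\<Prod>a\<leftarrow>diag_mat Dm. [:- a, 1:])"
    using char_poly_similar[OF sim] char_poly_upper_triangular[OF Dm ut] by simp
  have "nuclear_norm X = sum_list (map sqrt (diag_mat Dm))"
    unfolding nuclear_norm_def Let_def G_def[symmetric] cp root_order_sum ..
  also have "\<dots> = (\<Sum>j<n. sqrt (Dm $$ (j,j)))" using Dm
    by (simp add: diag_mat_def sum_list_sum_nth atLeast0LessThan)
  finally show ?thesis unfolding Dm_def G_def .
qed

definition ip :: "nat \<Rightarrow> (nat \<Rightarrow> real) \<Rightarrow> (nat \<Rightarrow> real) \<Rightarrow> real" where
  "ip N f g = (\<Sum>i<N. f i * g i)"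

lemma ip_comm: "ip N f g = ip N g f" unfolding ip_def by (simp add: mult.commute)

lemma ip_nonneg: "ip N f f \<ge> 0" unfolding ip_def by (simp add: sum_nonneg)

lemma cauchy_schwarz_sum:
  fixes a b :: "'a \<Rightarrow> real"
  shows "(\<Sum>j\<in>J. a j * b j)^2 \<le> (\<Sum>j\<in>J. (a j)^2) * (\<Sum>j\<in>J. (b j)^2)"
proof -
  have "0 \<le> (\<Sum>i\<in>J. \<Sum>j\<in>J. (a i * b j - a j * b i)^2)" by (simp add: sum_nonneg)
  also have "\<dots> = (\<Sum>i\<in>J. \<Sum>j\<in>J. (a i)^2 * (b j)^2 + (a j)^2 * (b i)^2 - 2 * ((a i * b i) * (a j * b j)))"
    by (rule sum.cong, simp, rule sum.cong, simp, simp add: power2_eq_square algebra_simps)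
  also have "\<dots> = (\<Sum>i\<in>J. \<Sum>j\<in>J. (a i)^2 * (b j)^2) + (\<Sum>i\<in>J. \<Sum>j\<in>J. (a j)^2 * (b i)^2)
      - 2 * (\<Sum>i\<in>J. \<Sum>j\<in>J. (a i * b i) * (a j * b j))"
    by (simp add: sum.distrib sum_subtractf sum_distrib_left)
  also have "(\<Sum>i\<in>J. \<Sum>j\<in>J. (a i)^2 * (b j)^2) = (\<Sum>j\<in>J. (a j)^2) * (\<Sum>j\<in>J. (b j)^2)"
    by (simp add: sum_product)
  also have "(\<Sum>i\<in>J. \<Sum>j\<in>J. (a j)^2 * (b i)^2) = (\<Sum>j\<in>J. (a j)^2) * (\<Sum>j\<in>J. (b j)^2)"
    by (subst sum.swap, simp add: sum_product)
  also have "(\<Sum>i\<in>J. \<Sum>j\<in>J. (a i * b i) * (a j * b j)) = (\<Sum>j\<in>J. a j * b j)^2"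
    by (simp add: sum_product power2_eq_square)
  finally show ?thesis by simp
qed

lemma sum_sq_card:
  fixes a :: "'a \<Rightarrow> real"
  shows "(\<Sum>j\<in>J. a j)^2 \<le> real (card J) * (\<Sum>j\<in>J. (a j)^2)"
  using cauchy_schwarz_sum[of a "\<lambda>_. 1" J] by (simp add: mult.commute)

lemma ip_cs: "(ip N f g)^2 \<le> ip N f f * ip N g g"
  unfolding ip_def using cauchy_schwarz_sum[of f g "{..<N}"] by (simp add: power2_eq_square)

lemma ip_cs_abs: "\<bar>ip N f g\<bar> \<le> sqrt (ip N f f) * sqrt (ip N g g)"
proof -
  have "\<bar>ip N f g\<bar> = sqrt ((ip N f g)^2)" by simp
  also have "\<dots> \<le> sqrt (ip N f f * ip N g g)" by (rule real_sqrt_le_mono, rule ip_cs)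
  finally show ?thesis by (simp add: real_sqrt_mult)
qed

definition orthonormal_on :: "nat \<Rightarrow> 'a set \<Rightarrow> ('a \<Rightarrow> nat \<Rightarrow> real) \<Rightarrow> bool" where
  "orthonormal_on N J f \<longleftrightarrow> (\<forall>j\<in>J. \<forall>j'\<in>J. ip N (f j) (f j') = (if j = j' then 1 else 0))"

lemma bessel:
  assumes fin: "finite J" and orth: "orthonormal_on N J f"
  shows "(\<Sum>j\<in>J. (ip N (f j) x)^2) \<le> ip N x x"
proof -
  define c where "c j = ip N (f j) x" for j
  define y where "y i = x i - (\<Sum>j\<in>J. c j * f j i)" for i
  have "0 \<le> ip N y y" by (rule ip_nonneg)
  also have "ip N y y = ip N x x - 2 * (\<Sum>j\<in>J. c j * c j) + (\<Sum>j\<in>J. \<Sum>j'\<in>J. c j * c j' * ip N (f j) (f j'))"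
  proof -
    have "ip N y y = (\<Sum>i<N. x i * x i - 2 * (\<Sum>j\<in>J. c j * (f j i * x i)) + (\<Sum>j\<in>J. \<Sum>j'\<in>J. c j * c j' * (f j i * f j' i)))"
      unfolding ip_def y_def
      by (rule sum.cong, simp, simp add: algebra_simps sum_distrib_left sum_distrib_right sum_subtractf
            sum.distrib power2_eq_square sum_product)
    also have "\<dots> = ip N x x - 2 * (\<Sum>i<N. \<Sum>j\<in>J. c j * (f j i * x i)) + (\<Sum>i<N. \<Sum>j\<in>J. \<Sum>j'\<in>J. c j * c j' * (f j i * f j' i))"
      unfolding ip_def by (simp add: sum.distrib sum_subtractf sum_distrib_left)
    also have "(\<Sum>i<N. \<Sum>j\<in>J. c j * (f j i * x i)) = (\<Sum>j\<in>J. c j * ip N (f j) x)"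
      unfolding ip_def by (subst sum.swap, simp add: sum_distrib_left)
    also have "(\<Sum>i<N. \<Sum>j\<in>J. \<Sum>j'\<in>J. c j * c j' * (f j i * f j' i)) = (\<Sum>j\<in>J. \<Sum>j'\<in>J. c j * c j' * ip N (f j) (f j'))"
      unfolding ip_def by (subst sum.swap, subst sum.swap, simp add: sum_distrib_left)
    finally show ?thesis unfolding c_def by simp
  qed
  also have "(\<Sum>j\<in>J. \<Sum>j'\<in>J. c j * c j' * ip N (f j) (f j')) = (\<Sum>j\<in>J. c j * c j)"
  proof (rule sum.cong[OF refl])
    fix j assume j: "j \<in> J"
    have "(\<Sum>j'\<in>J. c j * c j' * ip N (f j) (f j')) = (\<Sum>j'\<in>J. if j = j' then c j * c j' else 0)"
      by (rule sum.cong, simp, insert orth j, auto simp: orthonormal_on_def)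
    also have "\<dots> = c j * c j" using fin j by simp
    finally show "(\<Sum>j'\<in>J. c j * c j' * ip N (f j) (f j')) = c j * c j" .
  qed
  finally show ?thesis unfolding c_def by (simp add: power2_eq_square)
qed

lemma bilin_bound:
  assumes fin: "finite J" and of: "orthonormal_on m J f" and og: "orthonormal_on n J g"
  shows "(\<Sum>j\<in>J. ip m (f j) u * ip n (g j) v) \<le> sqrt (ip m u u) * sqrt (ip n v v)"
proof -
  have "(\<Sum>j\<in>J. ip m (f j) u * ip n (g j) v) \<le> \<bar>\<Sum>j\<in>J. ip m (f j) u * ip n (g j) v\<bar>" by simp
  also have "\<dots> \<le> sqrt (\<Sum>j\<in>J. (ip m (f j) u)^2) * sqrt (\<Sum>j\<in>J. (ip n (g j) v)^2)"
  proof -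
    have "\<bar>\<Sum>j\<in>J. ip m (f j) u * ip n (g j) v\<bar> = sqrt ((\<Sum>j\<in>J. ip m (f j) u * ip n (g j) v)^2)" by simp
    also have "\<dots> \<le> sqrt ((\<Sum>j\<in>J. (ip m (f j) u)^2) * (\<Sum>j\<in>J. (ip n (g j) v)^2))"
      by (rule real_sqrt_le_mono, rule cauchy_schwarz_sum)
    finally show ?thesis by (simp add: real_sqrt_mult)
  qed
  also have "\<dots> \<le> sqrt (ip m u u) * sqrt (ip n v v)"
    by (intro mult_mono real_sqrt_le_mono bessel[OF fin of] bessel[OF fin og] real_sqrt_ge_zero ip_nonneg sum_nonneg zero_le_power2)
  finally show ?thesis .
qed

lemma frob_bound:
  fixes Y :: "nat \<Rightarrow> nat \<Rightarrow> real"
  assumes fin: "finite J" and of: "orthonormal_on m J f" and og: "orthonormal_on n J g"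
  shows "(\<Sum>j\<in>J. \<Sum>i<m. f j i * (\<Sum>i'<n. Y i i' * g j i'))^2 \<le> real (card J) * (\<Sum>i<m. \<Sum>i'<n. (Y i i')^2)"
proof -
  define Yg where "Yg j i = (\<Sum>i'<n. Y i i' * g j i')" for j i
  have t: "(\<Sum>i<m. f j i * (\<Sum>i'<n. Y i i' * g j i')) = ip m (f j) (Yg j)" for j
    unfolding ip_def Yg_def ..
  have "(\<Sum>j\<in>J. ip m (f j) (Yg j))^2 \<le> real (card J) * (\<Sum>j\<in>J. (ip m (f j) (Yg j))^2)"
    by (rule sum_sq_card)
  also have "(\<Sum>j\<in>J. (ip m (f j) (Yg j))^2) \<le> (\<Sum>j\<in>J. ip m (Yg j) (Yg j))"
  proof (rule sum_mono)
    fix j assume j: "j \<in> J"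
    have "(ip m (f j) (Yg j))^2 \<le> ip m (f j) (f j) * ip m (Yg j) (Yg j)" by (rule ip_cs)
    also have "ip m (f j) (f j) = 1" using of j unfolding orthonormal_on_def by auto
    finally show "(ip m (f j) (Yg j))^2 \<le> ip m (Yg j) (Yg j)" by simp
  qed
  also have "(\<Sum>j\<in>J. ip m (Yg j) (Yg j)) = (\<Sum>i<m. \<Sum>j\<in>J. (ip n (g j) (\<lambda>i'. Y i i'))^2)"
    unfolding ip_def Yg_def by (subst sum.swap, rule sum.cong, simp, rule sum.cong, simp,
        simp add: power2_eq_square mult.commute)
  also have "\<dots> \<le> (\<Sum>i<m. ip n (\<lambda>i'. Y i i') (\<lambda>i'. Y i i'))"
    by (rule sum_mono, rule bessel[OF fin og])
  also have "\<dots> = (\<Sum>i<m. \<Sum>i'<n. (Y i i')^2)" unfolding ip_def by (simp add: power2_eq_square)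
  finally show ?thesis unfolding t by (simp add: mult_left_mono)
qed

lemma orthonormal_card:
  assumes fin: "finite J" and of: "orthonormal_on m J f"
  shows "card J \<le> m"
proof -
  have "real (card J) = (\<Sum>j\<in>J. ip m (f j) (f j))" using of unfolding orthonormal_on_def by simp
  also have "\<dots> = (\<Sum>i<m. \<Sum>j\<in>J. (ip m (f j) (\<lambda>t. if t = i then 1 else 0))^2)"
  proof -
    have "(\<Sum>j\<in>J. ip m (f j) (f j)) = (\<Sum>i<m. \<Sum>j\<in>J. (f j i)^2)"
      unfolding ip_def by (subst sum.swap, simp add: power2_eq_square)
    also have "\<dots> = (\<Sum>i<m. \<Sum>j\<in>J. (ip m (f j) (\<lambda>t. if t = i then 1 else 0))^2)"
    proof (rule sum.cong[OF refl], rule sum.cong[OF refl])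
      fix i j assume i: "i \<in> {..<m}"
      have "ip m (f j) (\<lambda>t. if t = i then 1 else 0) = (\<Sum>t<m. if t = i then f j t else 0)"
        unfolding ip_def by (rule sum.cong, auto)
      also have "\<dots> = f j i" using i by simp
      finally show "(f j i)^2 = (ip m (f j) (\<lambda>t. if t = i then 1 else 0))^2" by simp
    qed
    finally show ?thesis .
  qed
  also have "\<dots> \<le> (\<Sum>i<m. ip m (\<lambda>t. if t = i then 1 else 0) (\<lambda>t. if t = i then 1 else 0))"
    by (rule sum_mono, rule bessel[OF fin of])
  also have "\<dots> = (\<Sum>i<m. 1)"
  proof (rule sum.cong[OF refl])
    fix i assume i: "i \<in> {..<m}"
    have "ip m (\<lambda>t. if t = i then 1 else 0) (\<lambda>t. if t = i then 1 else 0) = (\<Sum>t<m. if t = i then 1 else 0)"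
      unfolding ip_def by (rule sum.cong, auto)
    also have "\<dots> = 1" using i by simp
    finally show "ip m (\<lambda>t. if t = i then 1 else 0) (\<lambda>t. if t = i then 1 else 0) = 1" .
  qed
  also have "\<dots> = real m" by simp
  finally show ?thesis by simp
qed

lemma ip_lin2:
  "ip N (\<lambda>i. x * f i + y * g i) (\<lambda>i. x' * f i + y' * g i)
     = x * x' * ip N f f + (x * y' + y * x') * ip N f g + y * y' * ip N g g"
  unfolding ip_def by (simp add: sum.distrib sum_distrib_left algebra_simps mult.commute[of "g _" "f _"])

lemma ip_lin1:
  "ip N (\<lambda>i. x * f i + y * g i) h = x * ip N f h + y * ip N g h"
  unfolding ip_def by (simp add: sum.distrib sum_distrib_left algebra_simps)

lemma equalize:
  fixes a c :: "nat \<Rightarrow> nat \<Rightarrow> real"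
  assumes "finite I" "card I = L"
    and "\<forall>j\<in>I. \<forall>j'\<in>I. j \<noteq> j' \<longrightarrow> ip m (a j) (a j') = 0 \<and> ip n (c j) (c j') = 0"
    and "\<forall>j\<in>I. ip m (a j) (a j) = ip n (c j) (c j)"
    and "(\<Sum>j\<in>I. ip m (a j) (a j)) = real L * \<mu>"
  shows "\<exists>us vs. length us = L \<and> length vs = L \<and>
           (\<forall>l<L. ip m (us!l) (us!l) = \<mu> \<and> ip n (vs!l) (vs!l) = \<mu>) \<and>
           (\<forall>i i'. (\<Sum>l<L. (us!l) i * (vs!l) i') = (\<Sum>j\<in>I. a j i * c j i'))"
  using assms
proof (induction L arbitrary: I a c)
  case 0
  hence "I = {}" by simp
  thus ?case by (intro exI[of _ "[]"], simp)
next
  case (Suc L I a c)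
  note fin = Suc.prems(1) and cardI = Suc.prems(2) and orth = Suc.prems(3) and bal = Suc.prems(4)
    and mean = Suc.prems(5)
  define w where "w j = ip m (a j) (a j)" for j
  have Ine: "I \<noteq> {}" using cardI by auto
  show ?case
  proof (cases "\<exists>p\<in>I. w p = \<mu>")
    case True
    then obtain p where p: "p \<in> I" "w p = \<mu>" by blast
    define I' where "I' = I - {p}"
    have fin': "finite I'" and card': "card I' = L" unfolding I'_def using fin cardI p by auto
    have "(\<Sum>j\<in>I. ip m (a j) (a j)) = w p + (\<Sum>j\<in>I'. ip m (a j) (a j))"
      unfolding I'_def w_def using fin p by (simp add: sum.remove)
    hence mean': "(\<Sum>j\<in>I'. ip m (a j) (a j)) = real L * \<mu>" using mean p by (simp add: algebra_simps)
    obtain us vs where IH: "length us = L" "length vs = L"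
      "\<forall>l<L. ip m (us!l) (us!l) = \<mu> \<and> ip n (vs!l) (vs!l) = \<mu>"
      "\<forall>i i'. (\<Sum>l<L. (us!l) i * (vs!l) i') = (\<Sum>j\<in>I'. a j i * c j i')"
      using Suc.IH[OF fin' card' _ _ mean'] orth bal unfolding I'_def by blast
    show ?thesis
    proof (rule exI[of _ "a p # us"], rule exI[of _ "c p # vs"], intro conjI allI impI)
      fix l assume "l < Suc L"
      thus "ip m ((a p # us)!l) ((a p # us)!l) = \<mu>"
        using IH(3) p bal unfolding w_def by (cases l, auto)
    next
      fix l assume "l < Suc L"
      thus "ip n ((c p # vs)!l) ((c p # vs)!l) = \<mu>"
        using IH(3) p bal unfolding w_def by (cases l, auto)
    next
      fix i i'
      have "(\<Sum>l<Suc L. ((a p # us)!l) i * ((c p # vs)!l) i') = a p i * c p i' + (\<Sum>l<L. (us!l) i * (vs!l) i')"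
        by (subst sum.lessThan_Suc_shift, simp)
      also have "\<dots> = (\<Sum>j\<in>I. a j i * c j i')" using IH(4) fin p unfolding I'_def by (simp add: sum.remove)
      finally show "(\<Sum>l<Suc L. ((a p # us)!l) i * ((c p # vs)!l) i') = (\<Sum>j\<in>I. a j i * c j i')" .
    qed (insert IH, auto)
  next
    case False
    have sumw: "(\<Sum>j\<in>I. w j) = real (Suc L) * \<mu>" using mean unfolding w_def .
    obtain p where p: "p \<in> I" "w p > \<mu>"
    proof (rule ccontr)
      assume "\<not> thesis"
      hence "\<forall>j\<in>I. w j < \<mu>" using False that by force
      hence "(\<Sum>j\<in>I. w j) < (\<Sum>j\<in>I. \<mu>)" using fin Ine by (intro sum_strict_mono, auto)
      thus False using sumw cardI by simp
    qed
    obtain q where q: "q \<in> I" "w q < \<mu>"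
    proof (rule ccontr)
      assume "\<not> thesis"
      hence "\<forall>j\<in>I. w j > \<mu>" using False that by force
      hence "(\<Sum>j\<in>I. \<mu>) < (\<Sum>j\<in>I. w j)" using fin Ine by (intro sum_strict_mono, auto)
      thus False using sumw cardI by simp
    qed
    have pq: "p \<noteq> q" using p q by auto
    define \<delta> where "\<delta> = w p - w q"
    have \<delta>: "\<delta> > 0" unfolding \<delta>_def using p q by simp
    define \<alpha> where "\<alpha> = sqrt ((\<mu> - w q) / \<delta>)"
    define \<beta> where "\<beta> = sqrt ((w p - \<mu>) / \<delta>)"
    have a2: "\<alpha> * \<alpha> = (\<mu> - w q) / \<delta>" unfolding \<alpha>_def using q \<delta> by simp
    have b2: "\<beta> * \<beta> = (w p - \<mu>) / \<delta>" unfolding \<beta>_def using p \<delta> by simp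
    have \<delta>ne: "\<delta> \<noteq> 0" using \<delta> by simp
    have e1: "(\<mu> - w q) + (w p - \<mu>) = \<delta>" unfolding \<delta>_def by simp
    have e2: "(\<mu> - w q) * w p + (w p - \<mu>) * w q = \<mu> * \<delta>" unfolding \<delta>_def by (simp add: algebra_simps)
    have e3: "(w p - \<mu>) * w p + (\<mu> - w q) * w q = (w p + w q - \<mu>) * \<delta>" unfolding \<delta>_def by (simp add: algebra_simps)
    have ab1: "\<alpha> * \<alpha> + \<beta> * \<beta> = 1" unfolding a2 b2 add_divide_distrib[symmetric] e1 using \<delta>ne by simp
    have uu: "\<alpha> * \<alpha> * w p + \<beta> * \<beta> * w q = \<mu>"
    proof -
      have "\<alpha> * \<alpha> * w p + \<beta> * \<beta> * w q = ((\<mu> - w q) * w p + (w p - \<mu>) * w q) / \<delta>"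
        unfolding a2 b2 by (simp add: add_divide_distrib)
      thus ?thesis unfolding e2 using \<delta>ne by simp
    qed
    have aa: "\<beta> * \<beta> * w p + \<alpha> * \<alpha> * w q = w p + w q - \<mu>"
    proof -
      have "\<beta> * \<beta> * w p + \<alpha> * \<alpha> * w q = ((w p - \<mu>) * w p + (\<mu> - w q) * w q) / \<delta>"
        unfolding a2 b2 by (simp add: add_divide_distrib)
      thus ?thesis unfolding e3 using \<delta>ne by simp
    qed
    define u where "u = (\<lambda>i. \<alpha> * a p i + \<beta> * a q i)"
    define v where "v = (\<lambda>i. \<alpha> * c p i + \<beta> * c q i)"
    define a' where "a' = (\<lambda>i. (- \<beta>) * a p i + \<alpha> * a q i)"
    define c' where "c' = (\<lambda>i. (- \<beta>) * c p i + \<alpha> * c q i)"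
    have opq: "ip m (a p) (a q) = 0" "ip n (c p) (c q) = 0" using orth p q pq by auto
    have wc: "ip n (c j) (c j) = w j" if "j \<in> I" for j using bal that unfolding w_def by auto
    have u_u: "ip m u u = \<mu>" unfolding u_def ip_lin2 opq w_def[symmetric] using uu by simp
    have v_v: "ip n v v = \<mu>" unfolding v_def ip_lin2 opq wc[OF p(1)] wc[OF q(1)] using uu by simp
    have a'a': "ip m a' a' = w p + w q - \<mu>" unfolding a'_def ip_lin2 opq w_def[symmetric] using aa by simp
    have c'c': "ip n c' c' = w p + w q - \<mu>" unfolding c'_def ip_lin2 opq wc[OF p(1)] wc[OF q(1)] using aa by simp
    have a'ip: "ip m a' h = (- \<beta>) * ip m (a p) h + \<alpha> * ip m (a q) h" for h unfolding a'_def by (rule ip_lin1)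
    have c'ip: "ip n c' h = (- \<beta>) * ip n (c p) h + \<alpha> * ip n (c q) h" for h unfolding c'_def by (rule ip_lin1)
    define I' where "I' = I - {p}"
    define a2 where "a2 = a(q := a')"
    define c2 where "c2 = c(q := c')"
    have qI': "q \<in> I'" unfolding I'_def using q pq by auto
    have fin': "finite I'" and card': "card I' = L" unfolding I'_def using fin cardI p by auto
    have orth': "\<forall>j\<in>I'. \<forall>j'\<in>I'. j \<noteq> j' \<longrightarrow> ip m (a2 j) (a2 j') = 0 \<and> ip n (c2 j) (c2 j') = 0"
    proof (intro ballI impI)
      fix j j' assume j: "j \<in> I'" and j': "j' \<in> I'" and jj: "j \<noteq> j'"
      have jI: "j \<in> I" "j \<noteq> p" and j'I: "j' \<in> I" "j' \<noteq> p" using j j' unfolding I'_def by auto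
      show "ip m (a2 j) (a2 j') = 0 \<and> ip n (c2 j) (c2 j') = 0"
      proof (cases "j = q")
        case True
        hence "j' \<noteq> q" using jj by simp
        thus ?thesis using True orth jI j'I p q pq unfolding a2_def c2_def
          by (auto simp: a'ip c'ip)
      next
        case False
        show ?thesis
        proof (cases "j' = q")
          case True
          thus ?thesis using False orth jI j'I p q pq unfolding a2_def c2_def
            by (auto simp: ip_comm[of _ _ a'] ip_comm[of _ _ c'] a'ip c'ip)
        next
          case False
          thus ?thesis using \<open>j \<noteq> q\<close> orth jI j'I jj unfolding a2_def c2_def by auto
        qed
      qed
    qed
    have bal': "\<forall>j\<in>I'. ip m (a2 j) (a2 j) = ip n (c2 j) (c2 j)"
      using bal a'a' c'c' unfolding a2_def c2_def I'_def by auto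
    have mean': "(\<Sum>j\<in>I'. ip m (a2 j) (a2 j)) = real L * \<mu>"
    proof -
      have "(\<Sum>j\<in>I'. ip m (a2 j) (a2 j)) = ip m a' a' + (\<Sum>j\<in>I' - {q}. w j)"
        using fin' qI' unfolding a2_def w_def by (simp add: sum.remove)
      also have "(\<Sum>j\<in>I' - {q}. w j) = (\<Sum>j\<in>I. w j) - w p - w q"
        using fin p q pq unfolding I'_def
        by (metis Diff_insert2 finite_Diff insertE insert_Diff sum.remove
            \<open>q \<in> I'\<close> I'_def add_diff_cancel_left' diff_diff_eq)
      finally show ?thesis unfolding a'a' sumw by (simp add: algebra_simps)
    qed
    obtain us vs where IH: "length us = L" "length vs = L"
      "\<forall>l<L. ip m (us!l) (us!l) = \<mu> \<and> ip n (vs!l) (vs!l) = \<mu>"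
      "\<forall>i i'. (\<Sum>l<L. (us!l) i * (vs!l) i') = (\<Sum>j\<in>I'. a2 j i * c2 j i')"
      using Suc.IH[OF fin' card' orth' bal' mean'] by blast
    show ?thesis
    proof (rule exI[of _ "u # us"], rule exI[of _ "v # vs"], intro conjI allI impI)
      fix l assume "l < Suc L"
      thus "ip m ((u # us)!l) ((u # us)!l) = \<mu>"
        using IH(3) u_u v_v by (cases l, auto)
    next
      fix l assume "l < Suc L"
      thus "ip n ((v # vs)!l) ((v # vs)!l) = \<mu>"
        using IH(3) u_u v_v by (cases l, auto)
    next
      fix i i'
      have "(\<Sum>l<Suc L. ((u # us)!l) i * ((v # vs)!l) i') = u i * v i' + (\<Sum>j\<in>I'. a2 j i * c2 j i')"
        using IH(4) by (subst sum.lessThan_Suc_shift, simp)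
      also have "(\<Sum>j\<in>I'. a2 j i * c2 j i') = a' i * c' i' + (\<Sum>j\<in>I' - {q}. a j i * c j i')"
        using fin' qI' unfolding a2_def c2_def by (simp add: sum.remove)
      also have "u i * v i' + (a' i * c' i' + (\<Sum>j\<in>I' - {q}. a j i * c j i'))
          = (\<alpha> * \<alpha> + \<beta> * \<beta>) * (a p i * c p i' + a q i * c q i') + (\<Sum>j\<in>I' - {q}. a j i * c j i')"
        unfolding u_def v_def a'_def c'_def by (simp add: algebra_simps)
      also have "\<dots> = (\<Sum>j\<in>I. a j i * c j i')"
        unfolding ab1 using fin p q pq unfolding I'_def
        by (simp add: sum.remove[of I p] sum.remove[of "I - {p}" q] Diff_insert2[symmetric] insert_commute)
      finally show "(\<Sum>l<Suc L. ((u # us)!l) i * ((v # vs)!l) i') = (\<Sum>j\<in>I. a j i * c j i')" .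
    qed (insert IH, auto)
  qed
qed

lemma pow_sum_sq:
  fixes t :: "nat \<Rightarrow> real"
  assumes "finite K"
  shows "(\<Sum>S\<in>Pow K. ((\<Sum>l\<in>S. t l) + c)^2)
       = 2 ^ card K * (c^2 + c * (\<Sum>l\<in>K. t l) + ((\<Sum>l\<in>K. t l)^2 + (\<Sum>l\<in>K. (t l)^2)) / 4)"
  using assms
proof (induction K arbitrary: c rule: finite_induct)
  case empty
  thus ?case by simp
next
  case (insert x F c)
  have disj: "Pow F \<inter> insert x ` Pow F = {}" using insert.hyps by auto
  have inj: "inj_on (insert x) (Pow F)" using insert.hyps unfolding inj_on_def by (metis PowD insert_ident subsetD)
  have "(\<Sum>S\<in>Pow (insert x F). ((\<Sum>l\<in>S. t l) + c)^2)
      = (\<Sum>S\<in>Pow F. ((\<Sum>l\<in>S. t l) + c)^2) + (\<Sum>S\<in>insert x ` Pow F. ((\<Sum>l\<in>S. t l) + c)^2)"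
    unfolding Pow_insert using insert.hyps disj by (subst sum.union_disjoint, auto)
  also have "(\<Sum>S\<in>insert x ` Pow F. ((\<Sum>l\<in>S. t l) + c)^2) = (\<Sum>S\<in>Pow F. ((\<Sum>l\<in>S. t l) + (c + t x))^2)"
  proof (subst sum.reindex[OF inj], unfold comp_def, rule sum.cong[OF refl])
    fix S assume "S \<in> Pow F"
    hence "finite S" "x \<notin> S" using insert.hyps finite_subset by auto
    thus "((\<Sum>l\<in>insert x S. t l) + c)^2 = ((\<Sum>l\<in>S. t l) + (c + t x))^2" by (simp add: algebra_simps)
  qed
  finally show ?case unfolding insert.IH using insert.hyps
    by (simp add: power2_eq_square algebra_simps add_divide_distrib)
qed

lemma Pi_sel_carrier[simp]: "Pi_sel k S \<in> carrier_mat k k" unfolding Pi_sel_def by simp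

lemma Pi_sel_index: "t < k \<Longrightarrow> l < k \<Longrightarrow> Pi_sel k S $$ (t,l) = (if t = l \<and> t \<in> S then 1 else 0)"
  unfolding Pi_sel_def by simp

lemma mult_entry:
  fixes A B :: "real mat"
  assumes "A \<in> carrier_mat a b" "B \<in> carrier_mat b c" "i < a" "j < c"
  shows "(A * B) $$ (i,j) = (\<Sum>t<b. A $$ (i,t) * B $$ (t,j))"
  using assms by (simp add: index_mult_mat scalar_prod_def atLeast0LessThan)

lemma sel_entry:
  fixes U V :: "real mat"
  assumes U: "U \<in> carrier_mat m k" and V: "V \<in> carrier_mat n k" and S: "S \<subseteq> {0..<k}"
    and i: "i < m" and j: "j < n"
  shows "(U * Pi_sel k S * transpose_mat V) $$ (i,j) = (\<Sum>l\<in>S. U $$ (i,l) * V $$ (j,l))"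
proof -
  have UP: "(U * Pi_sel k S) $$ (i,l) = (if l \<in> S then U $$ (i,l) else 0)" if l: "l < k" for l
  proof -
    have "(U * Pi_sel k S) $$ (i,l) = (\<Sum>t<k. U $$ (i,t) * Pi_sel k S $$ (t,l))"
      by (rule mult_entry[OF U _ i l], simp)
    also have "\<dots> = (\<Sum>t<k. if t = l then (if l \<in> S then U $$ (i,l) else 0) else 0)"
      by (rule sum.cong, simp, simp add: Pi_sel_index l)
    also have "\<dots> = (if l \<in> S then U $$ (i,l) else 0)" using l by simp
    finally show ?thesis .
  qed
  have UPc: "U * Pi_sel k S \<in> carrier_mat m k" using U by simp
  have "(U * Pi_sel k S * transpose_mat V) $$ (i,j) = (\<Sum>l<k. (U * Pi_sel k S) $$ (i,l) * transpose_mat V $$ (l,j))"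
    by (rule mult_entry[OF UPc _ i j], insert V, simp)
  also have "\<dots> = (\<Sum>l<k. if l \<in> S then U $$ (i,l) * V $$ (j,l) else 0)"
    by (rule sum.cong, simp, insert V j, simp add: UP)
  also have "\<dots> = (\<Sum>l\<in>{..<k} \<inter> S. U $$ (i,l) * V $$ (j,l))"
    by (simp add: sum.inter_restrict)
  also have "{..<k} \<inter> S = S" using S by auto
  finally show ?thesis .
qed

lemma loss_formula:
  fixes U V M :: "real mat"
  assumes U: "U \<in> carrier_mat m k" and V: "V \<in> carrier_mat n k" and M: "M \<in> carrier_mat m n"
  shows "dropout_loss k M U V =
    (1 / (2 ^ k - 1)) * (\<Sum>i<m. \<Sum>j<n. 2 ^ k * ((M $$ (i,j))^2 - M $$ (i,j) * (\<Sum>l<k. U $$ (i,l) * V $$ (j,l))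
        + (\<Sum>l<k. U $$ (i,l) * V $$ (j,l))^2 / 4) - (M $$ (i,j))^2)
    + 2 ^ k / (4 * (2 ^ k - 1)) * (\<Sum>l<k. (\<Sum>i<m. (U $$ (i,l))^2) * (\<Sum>j<n. (V $$ (j,l))^2))"
proof -
  define K where "K = {0..<k}"
  define F where "F S = frob_sq (U * Pi_sel k S * transpose_mat V - M)" for S
  have Fe: "F S = (\<Sum>i<m. \<Sum>j<n. ((\<Sum>l\<in>S. U $$ (i,l) * V $$ (j,l)) + (- M $$ (i,j)))^2)" if S: "S \<subseteq> K" for S
    unfolding F_def frob_sq_def using U V M S sel_entry[OF U V, of S] unfolding K_def
    by (intro sum.cong, auto)
  have "(\<Sum>S\<in>Pow K. F S) = (\<Sum>S\<in>Pow K. \<Sum>i<m. \<Sum>j<n. ((\<Sum>l\<in>S. U $$ (i,l) * V $$ (j,l)) + (- M $$ (i,j)))^2)"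
    by (rule sum.cong, auto simp: Fe)
  also have "\<dots> = (\<Sum>i<m. \<Sum>j<n. \<Sum>S\<in>Pow K. ((\<Sum>l\<in>S. U $$ (i,l) * V $$ (j,l)) + (- M $$ (i,j)))^2)"
    by (subst sum.swap, rule sum.cong, simp, rule sum.swap)
  also have "\<dots> = (\<Sum>i<m. \<Sum>j<n. 2 ^ k * ((M $$ (i,j))^2 - M $$ (i,j) * (\<Sum>l<k. U $$ (i,l) * V $$ (j,l))
        + ((\<Sum>l<k. U $$ (i,l) * V $$ (j,l))^2 + (\<Sum>l<k. (U $$ (i,l) * V $$ (j,l))^2)) / 4))"
    unfolding K_def by (intro sum.cong refl, subst pow_sum_sq, auto simp: atLeast0LessThan)
  finally have sumF: "(\<Sum>S\<in>Pow K. F S) = \<dots>" .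
  have F0: "F {} = (\<Sum>i<m. \<Sum>j<n. (M $$ (i,j))^2)" using Fe[of "{}"] by simp
  have "dropout_loss k M U V = (1 / (2 ^ k - 1)) * ((\<Sum>S\<in>Pow K. F S) - F {})"
    unfolding dropout_loss_def F_def[symmetric] K_def by (subst sum_diff1, auto)
  also have "(\<Sum>S\<in>Pow K. F S) - F {} = (\<Sum>i<m. \<Sum>j<n. 2 ^ k * ((M $$ (i,j))^2 - M $$ (i,j) * (\<Sum>l<k. U $$ (i,l) * V $$ (j,l))
        + (\<Sum>l<k. U $$ (i,l) * V $$ (j,l))^2 / 4) - (M $$ (i,j))^2)
     + (2 ^ k / 4 * (\<Sum>i<m. \<Sum>j<n. \<Sum>l<k. (U $$ (i,l) * V $$ (j,l))^2))" (is "_ = ?A + ?B")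
  proof -
    have "(\<Sum>S\<in>Pow K. F S) - F {} = (\<Sum>i<m. \<Sum>j<n. 2 ^ k * ((M $$ (i,j))^2 - M $$ (i,j) * (\<Sum>l<k. U $$ (i,l) * V $$ (j,l))
        + ((\<Sum>l<k. U $$ (i,l) * V $$ (j,l))^2 + (\<Sum>l<k. (U $$ (i,l) * V $$ (j,l))^2)) / 4) - (M $$ (i,j))^2)"
      unfolding sumF F0 by (simp add: sum_subtractf)
    also have "\<dots> = (\<Sum>i<m. \<Sum>j<n. (2 ^ k * ((M $$ (i,j))^2 - M $$ (i,j) * (\<Sum>l<k. U $$ (i,l) * V $$ (j,l))
        + (\<Sum>l<k. U $$ (i,l) * V $$ (j,l))^2 / 4) - (M $$ (i,j))^2) + 2 ^ k / 4 * (\<Sum>l<k. (U $$ (i,l) * V $$ (j,l))^2))"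
      by (intro sum.cong refl, simp add: field_simps)
    also have "\<dots> = ?A + ?B" by (simp add: sum.distrib sum_distrib_left)
    finally show ?thesis .
  qed
  also have "(\<Sum>i<m. \<Sum>j<n. \<Sum>l<k. (U $$ (i,l) * V $$ (j,l))^2) = (\<Sum>l<k. (\<Sum>i<m. (U $$ (i,l))^2) * (\<Sum>j<n. (V $$ (j,l))^2))"
  proof -
    have "(\<Sum>i<m. \<Sum>j<n. \<Sum>l<k. (U $$ (i,l) * V $$ (j,l))^2) = (\<Sum>i<m. \<Sum>l<k. \<Sum>j<n. (U $$ (i,l) * V $$ (j,l))^2)"
      by (rule sum.cong, simp, rule sum.swap)
    also have "\<dots> = (\<Sum>l<k. \<Sum>i<m. \<Sum>j<n. (U $$ (i,l) * V $$ (j,l))^2)" by (rule sum.swap)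
    also have "\<dots> = (\<Sum>l<k. (\<Sum>i<m. (U $$ (i,l))^2) * (\<Sum>j<n. (V $$ (j,l))^2))"
      by (rule sum.cong, simp, simp add: sum_product power_mult_distrib)
    finally show ?thesis .
  qed
  finally show ?thesis by (simp add: distrib_left)
qed

lemma expand_sum:
  "(\<Sum>j\<in>J. \<Sum>i<m. f j i * (\<Sum>i'<n. (\<Sum>l\<in>L. \<kappa> l * w l i * z l i') * g j i'))
   = (\<Sum>l\<in>L. \<kappa> l * (\<Sum>j\<in>J. ip m (f j) (w l) * ip n (g j) (z l)))"
proof -
  have "(\<Sum>j\<in>J. \<Sum>i<m. f j i * (\<Sum>i'<n. (\<Sum>l\<in>L. \<kappa> l * w l i * z l i') * g j i'))
      = (\<Sum>j\<in>J. \<Sum>i<m. \<Sum>i'<n. \<Sum>l\<in>L. \<kappa> l * (f j i * w l i) * (g j i' * z l i'))"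
    by (intro sum.cong refl, simp add: sum_distrib_left sum_distrib_right algebra_simps)
  also have "\<dots> = (\<Sum>j\<in>J. \<Sum>l\<in>L. \<Sum>i<m. \<Sum>i'<n. \<kappa> l * (f j i * w l i) * (g j i' * z l i'))"
  proof (rule sum.cong[OF refl])
    fix j
    have "(\<Sum>i<m. \<Sum>i'<n. \<Sum>l\<in>L. \<kappa> l * (f j i * w l i) * (g j i' * z l i'))
        = (\<Sum>i<m. \<Sum>l\<in>L. \<Sum>i'<n. \<kappa> l * (f j i * w l i) * (g j i' * z l i'))"
      by (rule sum.cong[OF refl], rule sum.swap)
    also have "\<dots> = (\<Sum>l\<in>L. \<Sum>i<m. \<Sum>i'<n. \<kappa> l * (f j i * w l i) * (g j i' * z l i'))"
      by (rule sum.swap)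
    finally show "(\<Sum>i<m. \<Sum>i'<n. \<Sum>l\<in>L. \<kappa> l * (f j i * w l i) * (g j i' * z l i'))
        = (\<Sum>l\<in>L. \<Sum>i<m. \<Sum>i'<n. \<kappa> l * (f j i * w l i) * (g j i' * z l i'))" .
  qed
  also have "\<dots> = (\<Sum>l\<in>L. \<Sum>j\<in>J. \<Sum>i<m. \<Sum>i'<n. \<kappa> l * (f j i * w l i) * (g j i' * z l i'))"
    by (rule sum.swap)
  also have "\<dots> = (\<Sum>l\<in>L. \<kappa> l * (\<Sum>j\<in>J. ip m (f j) (w l) * ip n (g j) (z l)))"
    unfolding ip_def
    by (intro sum.cong refl, simp only: sum_product, simp only: sum_distrib_left mult.assoc)
  finally show ?thesis .
qed

lemma expand_sub:
  fixes A B :: "nat \<Rightarrow> nat \<Rightarrow> real"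
  shows "(\<Sum>j\<in>J. \<Sum>i<m. f j i * (\<Sum>i'<n. (A i i' - B i i') * g j i'))
   = (\<Sum>j\<in>J. \<Sum>i<m. f j i * (\<Sum>i'<n. A i i' * g j i')) - (\<Sum>j\<in>J. \<Sum>i<m. f j i * (\<Sum>i'<n. B i i' * g j i'))"
  by (simp add: left_diff_distrib right_diff_distrib sum_subtractf)

lemma mult_transpose_entry:
  fixes U V :: "real mat"
  assumes "U \<in> carrier_mat m k" "V \<in> carrier_mat n k" "i < m" "j < n"
  shows "(U * transpose_mat V) $$ (i,j) = (\<Sum>l<k. U $$ (i,l) * V $$ (j,l))"
  using mult_entry[of U m k "transpose_mat V" n i j] assms by simp

lemma spectral_data:
  fixes X :: "real mat"
  assumes X: "X \<in> carrier_mat m n" and k: "k = min m n"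
  shows "\<exists>J e ov xo d. finite J \<and> card J \<le> k \<and> J \<subseteq> {..<n} \<and> orthonormal_on m J e \<and> orthonormal_on n J ov
     \<and> (\<forall>j\<in>J. d j > 0) \<and> (\<forall>j\<in>J. \<forall>j'\<in>J. ip m (xo j) (xo j') = (if j = j' then d j else 0))
     \<and> (\<forall>j\<in>J. \<forall>j'\<in>J. ip n (ov j) (ov j') = (if j = j' then 1 else 0))
     \<and> (\<forall>j\<in>J. e j = (\<lambda>i. xo j i / sqrt (d j)))
     \<and> (\<forall>j\<in>J. \<forall>i<m. xo j i = (\<Sum>t<n. X $$ (i,t) * ov j t))
     \<and> (\<forall>i<m. \<forall>i'<n. (\<Sum>j\<in>J. xo j i * ov j i') = X $$ (i,i'))
     \<and> nuclear_norm X = (\<Sum>j\<in>J. sqrt (d j))"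
proof -
  define G where "G = transpose_mat X * X"
  have G: "G \<in> carrier_mat n n" unfolding G_def using X by simp
  have GT: "transpose_mat G = G" unfolding G_def using X by (simp add: transpose_mult[of _ n m])
  obtain Ot where Ot: "Ot \<in> carrier_mat n n" and OO: "transpose_mat Ot * Ot = 1\<^sub>m n"
    and Dd: "diagonal_mat (transpose_mat Ot * G * Ot)"
    using spectral_real_sym[OF G GT] by blast
  define Dm where "Dm = transpose_mat Ot * G * Ot"
  define d where "d j = Dm $$ (j,j)" for j
  define ov where "ov j = (\<lambda>i. Ot $$ (i,j))" for j
  define XO where "XO = X * Ot"
  define xo where "xo j = (\<lambda>i. XO $$ (i,j))" for j
  have XOc: "XO \<in> carrier_mat m n" unfolding XO_def using X Ot by simp
  have OO': "Ot * transpose_mat Ot = 1\<^sub>m n"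
    using mat_mult_left_right_inverse[OF _ Ot OO] Ot by simp
  have F1: "ip n (ov j) (ov j') = (if j = j' then 1 else 0)" if "j < n" "j' < n" for j j'
  proof -
    have "(transpose_mat Ot * Ot) $$ (j,j') = ip n (ov j) (ov j')"
      unfolding ip_def ov_def using mult_entry[of "transpose_mat Ot" n n Ot n j j'] Ot that by simp
    thus ?thesis unfolding OO using that by simp
  qed
  have DXO: "Dm = transpose_mat XO * XO"
    unfolding Dm_def G_def XO_def using X Ot
    by (simp add: transpose_mult[of _ m n _ n] assoc_mult_mat[of "transpose_mat Ot" n n "transpose_mat X * X" n Ot n]
        assoc_mult_mat[of "transpose_mat X" n m X n Ot n] assoc_mult_mat[of "transpose_mat Ot" n n "transpose_mat X" m "X * Ot" n])
  have F2: "ip m (xo j) (xo j') = (if j = j' then d j else 0)" if "j < n" "j' < n" for j j'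
  proof -
    have "Dm $$ (j,j') = ip m (xo j) (xo j')"
      unfolding DXO ip_def xo_def using mult_entry[of "transpose_mat XO" n m XO n j j'] XOc that by simp
    moreover have "j \<noteq> j' \<Longrightarrow> Dm $$ (j,j') = 0" using Dd that G Ot unfolding Dm_def diagonal_mat_def by auto
    ultimately show ?thesis unfolding d_def by auto
  qed
  have F3: "(\<Sum>j<n. xo j i * ov j i') = X $$ (i,i')" if "i < m" "i' < n" for i i'
  proof -
    have "(\<Sum>j<n. xo j i * ov j i') = (XO * transpose_mat Ot) $$ (i,i')"
      unfolding xo_def ov_def using mult_entry[of XO m n "transpose_mat Ot" n i i'] XOc Ot that by simp
    also have "XO * transpose_mat Ot = X" unfolding XO_def using X Ot
      by (simp add: assoc_mult_mat[of _ m n _ n _ n] OO')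
    finally show ?thesis .
  qed
  have F4: "xo j i = (\<Sum>t<n. X $$ (i,t) * ov j t)" if "j < n" "i < m" for j i
    unfolding xo_def ov_def XO_def using mult_entry[OF X Ot that(2) that(1)] .
  have dnn: "d j \<ge> 0" if "j < n" for j using F2[OF that that] ip_nonneg[of m "xo j"] by simp
  define J where "J = {j. j < n \<and> d j > 0}"
  define e where "e j = (\<lambda>i. xo j i / sqrt (d j))" for j
  have finJ: "finite J" and Jn: "J \<subseteq> {..<n}" unfolding J_def by auto
  have ortho: "orthonormal_on n J ov" unfolding orthonormal_on_def
  proof (intro ballI)
    fix j j' assume "j \<in> J" "j' \<in> J"
    hence "j < n" "j' < n" using Jn by auto
    thus "ip n (ov j) (ov j') = (if j = j' then 1 else 0)" by (rule F1)
  qed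
  have orthe: "orthonormal_on m J e" unfolding orthonormal_on_def
  proof (intro ballI)
    fix j j' assume j: "j \<in> J" and j': "j' \<in> J"
    have "ip m (e j) (e j') = ip m (xo j) (xo j') / (sqrt (d j) * sqrt (d j'))"
      unfolding e_def ip_def by (simp add: sum_divide_distrib)
    thus "ip m (e j) (e j') = (if j = j' then 1 else 0)" using F2 j j' unfolding J_def
      by (auto simp: real_sqrt_mult[symmetric])
  qed
  have cardm: "card J \<le> m" by (rule orthonormal_card[OF finJ orthe])
  have cardn: "card J \<le> n" using card_mono[OF _ Jn] by simp
  have zero: "xo j i = 0" if "j < n" "j \<notin> J" "i < m" for j i
  proof -
    have "d j = 0" using dnn[OF that(1)] that unfolding J_def by auto
    hence "(\<Sum>t<m. (xo j t)^2) = 0" using F2[OF that(1) that(1)] unfolding ip_def by (simp add: power2_eq_square)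
    thus ?thesis using that(3) by (simp add: sum_nonneg_eq_0_iff)
  qed
  have F3': "(\<Sum>j\<in>J. xo j i * ov j i') = X $$ (i,i')" if "i < m" "i' < n" for i i'
  proof -
    have "(\<Sum>j<n. xo j i * ov j i') = (\<Sum>j\<in>J. xo j i * ov j i')"
      using Jn zero that by (intro sum.mono_neutral_right, auto)
    thus ?thesis using F3[OF that] by simp
  qed
  have "nuclear_norm X = (\<Sum>j<n. sqrt (d j))"
    unfolding d_def Dm_def G_def using nuclear_norm_eig[OF X Ot OO] Dd unfolding G_def by simp
  also have "\<dots> = (\<Sum>j\<in>J. sqrt (d j))"
  proof (rule sum.mono_neutral_right)
    show "\<forall>i\<in>{..<n} - J. sqrt (d i) = 0"
    proof
      fix i assume "i \<in> {..<n} - J"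
      hence "i < n" "\<not> d i > 0" unfolding J_def by auto
      hence "d i = 0" using dnn[of i] by simp
      thus "sqrt (d i) = 0" by simp
    qed
  qed (insert Jn, auto)
  finally have nn: "nuclear_norm X = (\<Sum>j\<in>J. sqrt (d j))" .
  show ?thesis
    apply (rule exI[of _ J], rule exI[of _ e], rule exI[of _ ov], rule exI[of _ xo], rule exI[of _ d])
    using finJ cardm cardn k Jn orthe ortho F2 F1 F4 F3' nn unfolding J_def e_def by auto
qed

lemma ip_scale_div: "ip N (\<lambda>i. f i / a) (\<lambda>i. g i / b) = ip N f g / (a * b)"
  unfolding ip_def by (simp add: sum_divide_distrib)

lemma ip_scale_mult: "ip N (\<lambda>i. f i * a) (\<lambda>i. g i * b) = ip N f g * (a * b)"
  unfolding ip_def by (simp add: sum_distrib_left algebra_simps)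

lemma ip_zero_left[simp]: "ip N (\<lambda>_. 0) g = 0" unfolding ip_def by simp
lemma ip_zero_right[simp]: "ip N f (\<lambda>_. 0) = 0" unfolding ip_def by simp

lemma competitor:
  fixes U V M :: "real mat"
  assumes k: "k = min m n" "m \<ge> 1" "n \<ge> 1"
    and U: "U \<in> carrier_mat m k" and V: "V \<in> carrier_mat n k" and M: "M \<in> carrier_mat m n"
    and opt: "\<And>U' V'. U' \<in> carrier_mat m k \<Longrightarrow> V' \<in> carrier_mat n k \<Longrightarrow>
           dropout_loss k M U V \<le> dropout_loss k M U' V'"
    and fin: "finite J" and cardJ: "card J \<le> k" and Jn: "J \<subseteq> {..<n}"
    and dpos: "\<forall>j\<in>J. d j > 0"
    and xoo: "\<forall>j\<in>J. \<forall>j'\<in>J. ip m (xo j) (xo j') = (if j = j' then d j else 0)"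
    and ovo: "\<forall>j\<in>J. \<forall>j'\<in>J. ip n (ov j) (ov j') = (if j = j' then 1 else 0)"
    and Xd: "\<forall>i<m. \<forall>i'<n. (\<Sum>j\<in>J. xo j i * ov j i') = (U * transpose_mat V) $$ (i,i')"
    and N: "N = (\<Sum>j\<in>J. sqrt (d j))"
  shows "(\<Sum>l<k. (\<Sum>i<m. (U $$ (i,l))^2) * (\<Sum>j<n. (V $$ (j,l))^2)) \<le> real k * (N / real k)^2"
proof -
  have kpos: "k > 0" using k by simp
  define lam where "lam = N / real k"
  define I where "I = J \<union> {n..<n + (k - card J)}"
  define aa where "aa j = (if j \<in> J then (\<lambda>i. xo j i / sqrt (sqrt (d j))) else (\<lambda>_. 0))" for j
  define cc where "cc j = (if j \<in> J then (\<lambda>i. ov j i * sqrt (sqrt (d j))) else (\<lambda>_. 0))" for j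
  have finI: "finite I" unfolding I_def using fin by simp
  have disj: "J \<inter> {n..<n + (k - card J)} = {}" using Jn by auto
  have cardI: "card I = k" unfolding I_def using card_Un_disjoint[OF fin _ disj] cardJ by simp
  have ss: "sqrt (sqrt x) * sqrt (sqrt x) = sqrt x" if "x \<ge> 0" for x :: real
    using that by (simp add: real_sqrt_mult[symmetric])
  have orth: "\<forall>j\<in>I. \<forall>j'\<in>I. j \<noteq> j' \<longrightarrow> ip m (aa j) (aa j') = 0 \<and> ip n (cc j) (cc j') = 0"
  proof (intro ballI impI)
    fix j j' assume "j \<in> I" "j' \<in> I" "j \<noteq> j'"
    show "ip m (aa j) (aa j') = 0 \<and> ip n (cc j) (cc j') = 0"
    proof (cases "j \<in> J \<and> j' \<in> J")
      case True
      thus ?thesis using xoo ovo \<open>j \<noteq> j'\<close> unfolding aa_def cc_def by (simp add: ip_scale_div ip_scale_mult)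
    next
      case False
      thus ?thesis unfolding aa_def cc_def by auto
    qed
  qed
  have aaa: "ip m (aa j) (aa j) = (if j \<in> J then sqrt (d j) else 0)" for j
  proof (cases "j \<in> J")
    case True
    have "ip m (aa j) (aa j) = d j / (sqrt (sqrt (d j)) * sqrt (sqrt (d j)))"
      unfolding aa_def using True xoo by (simp add: ip_scale_div)
    also have "\<dots> = sqrt (d j)" using dpos True by (subst ss, simp add: less_imp_le, simp add: real_div_sqrt less_imp_le)
    finally show ?thesis using True by simp
  qed (simp add: aa_def)
  have bal: "\<forall>j\<in>I. ip m (aa j) (aa j) = ip n (cc j) (cc j)"
  proof
    fix j assume "j \<in> I"
    show "ip m (aa j) (aa j) = ip n (cc j) (cc j)"
    proof (cases "j \<in> J")
      case True
      have "ip n (cc j) (cc j) = sqrt (d j)" unfolding cc_def using True ovo dpos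
        by (simp add: ip_scale_mult ss less_imp_le)
      thus ?thesis using aaa True by simp
    qed (simp add: aa_def cc_def)
  qed
  have mean: "(\<Sum>j\<in>I. ip m (aa j) (aa j)) = real k * lam"
  proof -
    have "(\<Sum>j\<in>I. ip m (aa j) (aa j)) = (\<Sum>j\<in>J. sqrt (d j))"
      unfolding aaa using finI by (simp add: sum.If_cases I_def Int_absorb1)
    thus ?thesis unfolding lam_def N using kpos by simp
  qed
  obtain us vs where len: "length us = k" "length vs = k"
    and nrm: "\<forall>l<k. ip m (us!l) (us!l) = lam \<and> ip n (vs!l) (vs!l) = lam"
    and sm: "\<forall>i i'. (\<Sum>l<k. (us!l) i * (vs!l) i') = (\<Sum>j\<in>I. aa j i * cc j i')"
    using equalize[OF finI cardI orth bal mean] by blast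
  define U' where "U' = mat m k (\<lambda>(i,l). (us!l) i)"
  define V' where "V' = mat n k (\<lambda>(j,l). (vs!l) j)"
  have U': "U' \<in> carrier_mat m k" and V': "V' \<in> carrier_mat n k" unfolding U'_def V'_def by auto
  have sameX: "(\<Sum>l<k. U' $$ (i,l) * V' $$ (j,l)) = (\<Sum>l<k. U $$ (i,l) * V $$ (j,l))" if "i < m" "j < n" for i j
  proof -
    have "(\<Sum>l<k. U' $$ (i,l) * V' $$ (j,l)) = (\<Sum>l<k. (us!l) i * (vs!l) j)"
      unfolding U'_def V'_def using that by (intro sum.cong, auto)
    also have "\<dots> = (\<Sum>j'\<in>I. aa j' i * cc j' j)" using sm by simp
    also have "\<dots> = (\<Sum>j'\<in>J. xo j' i * ov j' j)"
    proof -
      have "(\<Sum>j'\<in>I. aa j' i * cc j' j) = (\<Sum>j'\<in>J. aa j' i * cc j' j)"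
        using finI unfolding I_def aa_def by (intro sum.mono_neutral_right, auto)
      also have "\<dots> = (\<Sum>j'\<in>J. xo j' i * ov j' j)"
      proof (rule sum.cong[OF refl])
        fix j' assume j': "j' \<in> J"
        have "sqrt (sqrt (d j')) > 0" using dpos j' by simp
        thus "aa j' i * cc j' j = xo j' i * ov j' j" unfolding aa_def cc_def using j' by simp
      qed
      finally show ?thesis .
    qed
    also have "\<dots> = (U * transpose_mat V) $$ (i,j)" using Xd that by simp
    also have "\<dots> = (\<Sum>l<k. U $$ (i,l) * V $$ (j,l))" by (rule mult_transpose_entry[OF U V that])
    finally show ?thesis .
  qed
  have R': "(\<Sum>l<k. (\<Sum>i<m. (U' $$ (i,l))^2) * (\<Sum>j<n. (V' $$ (j,l))^2)) = real k * lam^2"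
  proof -
    have "(\<Sum>l<k. (\<Sum>i<m. (U' $$ (i,l))^2) * (\<Sum>j<n. (V' $$ (j,l))^2)) = (\<Sum>l<k. lam * lam)"
    proof (rule sum.cong[OF refl])
      fix l assume l: "l \<in> {..<k}"
      have "(\<Sum>i<m. (U' $$ (i,l))^2) = ip m (us!l) (us!l)" unfolding U'_def ip_def using l
        by (intro sum.cong, auto simp: power2_eq_square)
      moreover have "(\<Sum>j<n. (V' $$ (j,l))^2) = ip n (vs!l) (vs!l)" unfolding V'_def ip_def using l
        by (intro sum.cong, auto simp: power2_eq_square)
      ultimately show "(\<Sum>i<m. (U' $$ (i,l))^2) * (\<Sum>j<n. (V' $$ (j,l))^2) = lam * lam" using nrm l by simp
    qed
    thus ?thesis by (simp add: power2_eq_square)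
  qed
  have le: "dropout_loss k M U V \<le> dropout_loss k M U' V'" by (rule opt[OF U' V'])
  define c :: real where "c = 2 ^ k / (4 * (2 ^ k - 1))"
  have cpos: "c > 0" unfolding c_def using kpos by (simp add: field_simps)
  have firsteq: "(\<Sum>i<m. \<Sum>j<n. 2 ^ k * ((M $$ (i,j))^2 - M $$ (i,j) * (\<Sum>l<k. U' $$ (i,l) * V' $$ (j,l))
        + (\<Sum>l<k. U' $$ (i,l) * V' $$ (j,l))^2 / 4) - (M $$ (i,j))^2)
     = (\<Sum>i<m. \<Sum>j<n. 2 ^ k * ((M $$ (i,j))^2 - M $$ (i,j) * (\<Sum>l<k. U $$ (i,l) * V $$ (j,l))
        + (\<Sum>l<k. U $$ (i,l) * V $$ (j,l))^2 / 4) - (M $$ (i,j))^2)"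
    by (intro sum.cong refl, simp add: sameX)
  have "c * (\<Sum>l<k. (\<Sum>i<m. (U $$ (i,l))^2) * (\<Sum>j<n. (V $$ (j,l))^2))
      \<le> c * (\<Sum>l<k. (\<Sum>i<m. (U' $$ (i,l))^2) * (\<Sum>j<n. (V' $$ (j,l))^2))"
    using le unfolding loss_formula[OF U V M] loss_formula[OF U' V' M] firsteq c_def by simp
  hence "(\<Sum>l<k. (\<Sum>i<m. (U $$ (i,l))^2) * (\<Sum>j<n. (V $$ (j,l))^2)) \<le> real k * lam^2"
    using cpos R' by simp
  thus ?thesis unfolding lam_def .
qed

lemma structure_min:
  fixes U V M :: "real mat"
  assumes k: "k = min m n" "m \<ge> 1" "n \<ge> 1"
    and U: "U \<in> carrier_mat m k" and V: "V \<in> carrier_mat n k" and M: "M \<in> carrier_mat m n"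
    and opt: "\<And>U' V'. U' \<in> carrier_mat m k \<Longrightarrow> V' \<in> carrier_mat n k \<Longrightarrow>
           dropout_loss k M U V \<le> dropout_loss k M U' V'"
  shows "\<exists>(J::nat set) e ov. finite J \<and> card J \<le> k \<and> orthonormal_on m J e \<and> orthonormal_on n J ov \<and>
     (\<forall>l<k. (\<Sum>j\<in>J. ip m (e j) (\<lambda>i. U $$ (i,l)) * ip n (ov j) (\<lambda>i. V $$ (i,l)))
              = nuclear_norm (U * transpose_mat V) / real k) \<and>
     (\<forall>l<k. sqrt (ip m (\<lambda>i. U $$ (i,l)) (\<lambda>i. U $$ (i,l))) * sqrt (ip n (\<lambda>i. V $$ (i,l)) (\<lambda>i. V $$ (i,l)))
              = nuclear_norm (U * transpose_mat V) / real k)"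
proof -
  have kpos: "k > 0" using k by simp
  define X where "X = U * transpose_mat V"
  have X: "X \<in> carrier_mat m n" unfolding X_def using U V by simp
  obtain J e ov xo d where fin: "finite J" and cardJ: "card J \<le> k" and Jn: "J \<subseteq> {..<n}"
    and orthe: "orthonormal_on m J e" and ortho: "orthonormal_on n J ov"
    and dpos: "\<forall>j\<in>J. d j > 0" and xoo: "\<forall>j\<in>J. \<forall>j'\<in>J. ip m (xo j) (xo j') = (if j = j' then d j else 0)"
    and ovo: "\<forall>j\<in>J. \<forall>j'\<in>J. ip n (ov j) (ov j') = (if j = j' then 1 else 0)"
    and edef: "\<forall>j\<in>J. e j = (\<lambda>i. xo j i / sqrt (d j))"
    and xodef: "\<forall>j\<in>J. \<forall>i<m. xo j i = (\<Sum>t<n. X $$ (i,t) * ov j t)"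
    and Xd: "\<forall>i<m. \<forall>i'<n. (\<Sum>j\<in>J. xo j i * ov j i') = X $$ (i,i')"
    and N: "nuclear_norm X = (\<Sum>j\<in>J. sqrt (d j))"
    using spectral_data[OF X k(1)] by blast
  define NN where "NN = nuclear_norm X"
  define lam where "lam = NN / real k"
  define u where "u l = (\<lambda>i. U $$ (i,l))" for l
  define v where "v l = (\<lambda>i. V $$ (i,l))" for l
  define a where "a l = (\<Sum>j\<in>J. ip m (e j) (u l) * ip n (ov j) (v l))" for l
  define b where "b l = sqrt (ip m (u l) (u l)) * sqrt (ip n (v l) (v l))" for l
  have R: "(\<Sum>l<k. (\<Sum>i<m. (U $$ (i,l))^2) * (\<Sum>j<n. (V $$ (j,l))^2)) \<le> real k * (NN / real k)^2"
    unfolding NN_def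
    by (rule competitor[OF k U V M opt fin cardJ Jn dpos xoo ovo _ N], insert Xd, unfold X_def, blast)
  have Rb: "(\<Sum>l<k. (\<Sum>i<m. (U $$ (i,l))^2) * (\<Sum>j<n. (V $$ (j,l))^2)) = (\<Sum>l<k. (b l)^2)"
  proof (rule sum.cong[OF refl])
    fix l
    have "(b l)^2 = ip m (u l) (u l) * ip n (v l) (v l)" unfolding b_def
      using ip_nonneg[of m "u l"] ip_nonneg[of n "v l"] by (simp add: power_mult_distrib)
    thus "(\<Sum>i<m. (U $$ (i,l))^2) * (\<Sum>j<n. (V $$ (j,l))^2) = (b l)^2"
      unfolding ip_def u_def v_def by (simp add: power2_eq_square)
  qed
  have ab: "a l \<le> b l" for l unfolding a_def b_def by (rule bilin_bound[OF fin orthe ortho])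
  have suma: "(\<Sum>l<k. a l) = NN"
  proof -
    have "(\<Sum>j\<in>J. \<Sum>i<m. e j i * (\<Sum>i'<n. (\<Sum>l\<in>{..<k}. 1 * u l i * v l i') * ov j i'))
        = (\<Sum>l\<in>{..<k}. 1 * (\<Sum>j\<in>J. ip m (e j) (u l) * ip n (ov j) (v l)))"
      by (rule expand_sum)
    hence "(\<Sum>l<k. a l) = (\<Sum>j\<in>J. \<Sum>i<m. e j i * (\<Sum>i'<n. (\<Sum>l<k. u l i * v l i') * ov j i'))"
      unfolding a_def by simp
    also have "\<dots> = (\<Sum>j\<in>J. \<Sum>i<m. e j i * xo j i)"
    proof (intro sum.cong refl)
      fix j i assume j: "j \<in> J" and i: "i \<in> {..<m}"
      have "(\<Sum>i'<n. (\<Sum>l<k. u l i * v l i') * ov j i') = (\<Sum>i'<n. X $$ (i,i') * ov j i')"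
        unfolding u_def v_def X_def using i by (intro sum.cong refl, subst mult_transpose_entry[OF U V], auto)
      also have "\<dots> = xo j i" using xodef j i by simp
      finally show "e j i * (\<Sum>i'<n. (\<Sum>l<k. u l i * v l i') * ov j i') = e j i * xo j i" by simp
    qed
    also have "\<dots> = (\<Sum>j\<in>J. sqrt (d j))"
    proof (rule sum.cong[OF refl])
      fix j assume j: "j \<in> J"
      have "(\<Sum>i<m. e j i * xo j i) = ip m (xo j) (xo j) / sqrt (d j)"
        unfolding edef[rule_format, OF j] ip_def by (simp add: sum_divide_distrib)
      also have "\<dots> = d j / sqrt (d j)" using xoo j by simp
      also have "\<dots> = sqrt (d j)" using dpos j by (simp add: real_div_sqrt less_imp_le)
      finally show "(\<Sum>i<m. e j i * xo j i) = sqrt (d j)" .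
    qed
    finally show ?thesis unfolding NN_def N .
  qed
  have NNnn: "NN \<ge> 0" unfolding NN_def N using dpos by (intro sum_nonneg, simp add: less_imp_le)
  have bnn: "b l \<ge> 0" for l unfolding b_def using ip_nonneg[of m "u l"] ip_nonneg[of n "v l"] by simp
  have sumb_ge: "(\<Sum>l<k. b l) \<ge> NN" using suma sum_mono[of "{..<k}" a b] ab by simp
  have kl: "real k * lam = NN" unfolding lam_def using kpos by simp
  have Rle: "(\<Sum>l<k. (b l)^2) \<le> real k * lam^2" using R Rb unfolding lam_def by simp
  have sq0: "(\<Sum>l<k. (b l - lam)^2) \<le> 0"
  proof -
    have "(\<Sum>l<k. (b l - lam)^2) = (\<Sum>l<k. (b l)^2) - 2 * lam * (\<Sum>l<k. b l) + real k * lam^2"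
      by (simp add: power2_eq_square algebra_simps sum.distrib sum_subtractf sum_distrib_left)
    also have "\<dots> \<le> real k * lam^2 - 2 * lam * NN + real k * lam^2"
      using Rle sumb_ge lam_def NNnn kpos
      by (smt (verit, best) divide_nonneg_nonneg mult_left_mono of_nat_0_le_iff)
    also have "\<dots> = 0" unfolding kl[symmetric] by (simp add: power2_eq_square)
    finally show ?thesis .
  qed
  have beq: "b l = lam" if "l < k" for l
  proof -
    have "(\<Sum>l<k. (b l - lam)^2) = 0" using sq0 by (simp add: eq_iff sum_nonneg)
    hence "(b l - lam)^2 = 0" using that by (simp add: sum_nonneg_eq_0_iff)
    thus ?thesis by simp
  qed
  have aeq: "a l = lam" if "l < k" for l
  proof -
    have "(\<Sum>l<k. b l) = real k * lam" using beq by simp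
    hence "(\<Sum>l<k. b l - a l) = 0" using suma kl by (simp add: sum_subtractf)
    moreover have "\<forall>l\<in>{..<k}. b l - a l \<ge> 0" using ab by simp
    ultimately have "b l - a l = 0" using that sum_nonneg_eq_0_iff[of "{..<k}" "\<lambda>l. b l - a l"] by simp
    thus ?thesis using beq[OF that] by simp
  qed
  have A: "\<forall>l<k. (\<Sum>j\<in>J. ip m (e j) (\<lambda>i. U $$ (i,l)) * ip n (ov j) (\<lambda>i. V $$ (i,l)))
              = nuclear_norm (U * transpose_mat V) / real k"
    using aeq unfolding a_def u_def v_def lam_def NN_def X_def by blast
  have B: "\<forall>l<k. sqrt (ip m (\<lambda>i. U $$ (i,l)) (\<lambda>i. U $$ (i,l))) * sqrt (ip n (\<lambda>i. V $$ (i,l)) (\<lambda>i. V $$ (i,l)))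
              = nuclear_norm (U * transpose_mat V) / real k"
    using beq unfolding b_def u_def v_def lam_def NN_def X_def by blast
  show ?thesis
    by (rule exI[where x=J], rule exI[where x=e], rule exI[where x=ov], intro conjI fin cardJ orthe ortho A B)
qed

lemma colortho:
  fixes P :: "real mat"
  assumes P: "P \<in> carrier_mat m k" and PP: "transpose_mat P * P = 1\<^sub>m k" and r: "r \<le> k"
  shows "orthonormal_on m {..<r} (\<lambda>t i. P $$ (i,t))"
  unfolding orthonormal_on_def
proof (intro ballI)
  fix t t' assume t: "t \<in> {..<r}" and t': "t' \<in> {..<r}"
  have "(transpose_mat P * P) $$ (t,t') = ip m (\<lambda>i. P $$ (i,t)) (\<lambda>i. P $$ (i,t'))"
    unfolding ip_def using mult_entry[of "transpose_mat P" k m P k t t'] P t t' r by simp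
  thus "ip m (\<lambda>i. P $$ (i,t)) (\<lambda>i. P $$ (i,t')) = (if t = t' then 1 else 0)"
    unfolding PP using t t' r by simp
qed

lemma final_bound:
  fixes U V P Q :: "real mat" and \<sigma> :: "nat \<Rightarrow> real"
  assumes kpos: "k > 0"
    and U: "U \<in> carrier_mat m k" and V: "V \<in> carrier_mat n k"
    and P: "P \<in> carrier_mat m k" and Q: "Q \<in> carrier_mat n k"
    and PP: "transpose_mat P * P = 1\<^sub>m k" and QQ: "transpose_mat Q * Q = 1\<^sub>m k"
    and \<sigma>pos: "\<And>i. i < k \<Longrightarrow> \<sigma> i > 0"
    and fin: "finite J" and cardJ: "card J \<le> k" and orthe: "orthonormal_on m J e" and ortho: "orthonormal_on n J ov"
    and aeq: "\<forall>l<k. (\<Sum>j\<in>J. ip m (e j) (\<lambda>i. U $$ (i,l)) * ip n (ov j) (\<lambda>i. V $$ (i,l))) = lam"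
    and beq: "\<forall>l<k. sqrt (ip m (\<lambda>i. U $$ (i,l)) (\<lambda>i. U $$ (i,l))) * sqrt (ip n (\<lambda>i. V $$ (i,l)) (\<lambda>i. V $$ (i,l))) = lam"
    and r: "r \<le> k" and S: "S \<subseteq> {0..<k}" and cardS: "card S = r"
  shows "frob_sq (U * Pi_sel k S * transpose_mat V - trunc_approx P Q \<sigma> r)
           \<ge> (1 / real k) * (real r * lam - (\<Sum>i<r. \<sigma> i))^2"
proof -
  define u where "u l = (\<lambda>i. U $$ (i,l))" for l
  define v where "v l = (\<lambda>i. V $$ (i,l))" for l
  define pp where "pp t = (\<lambda>i. P $$ (i,t))" for t
  define qq where "qq t = (\<lambda>i. Q $$ (i,t))" for t
  define A1 where "A1 i i' = (\<Sum>l\<in>S. (\<lambda>_. 1) l * u l i * v l i')" for i i'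
  define A2 where "A2 i i' = (\<Sum>t\<in>{..<r}. \<sigma> t * pp t i * qq t i')" for i i'
  define Y where "Y = U * Pi_sel k S * transpose_mat V - trunc_approx P Q \<sigma> r"
  have Ta: "trunc_approx P Q \<sigma> r \<in> carrier_mat m n" unfolding trunc_approx_def using P Q by simp
  have Yc: "Y \<in> carrier_mat m n" unfolding Y_def by (rule minus_carrier_mat[OF Ta])
  have Ye: "Y $$ (i,i') = A1 i i' - A2 i i'" if "i < m" "i' < n" for i i'
  proof -
    have "(U * Pi_sel k S * transpose_mat V) $$ (i,i') = A1 i i'"
      unfolding A1_def u_def v_def using sel_entry[OF U V S that] by simp
    moreover have "trunc_approx P Q \<sigma> r $$ (i,i') = A2 i i'"
      unfolding trunc_approx_def A2_def pp_def qq_def using that P Q by simp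
    ultimately show ?thesis unfolding Y_def using that U V Ta by simp
  qed
  have frob: "frob_sq Y = (\<Sum>i<m. \<Sum>i'<n. (A1 i i' - A2 i i')^2)"
    unfolding frob_sq_def using Yc Ye by (intro sum.cong, auto)
  have frobnn: "frob_sq Y \<ge> 0" unfolding frob by (simp add: sum_nonneg)
  have orthp: "orthonormal_on m {..<r} pp" unfolding pp_def by (rule colortho[OF P PP r])
  have orthq: "orthonormal_on n {..<r} qq" unfolding qq_def by (rule colortho[OF Q QQ r])
  have orthpk: "orthonormal_on m {..<k} pp" unfolding pp_def by (rule colortho[OF P PP], simp)
  have orthqk: "orthonormal_on n {..<k} qq" unfolding qq_def by (rule colortho[OF Q QQ], simp)
  have Sk: "l \<in> S \<Longrightarrow> l < k" for l using S by auto
  have finS: "finite S" using S finite_subset by blast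
  define sig where "sig = (\<Sum>i<r. \<sigma> i)"
  show ?thesis
  proof (cases "sig \<le> real r * lam")
    case True
    define T where "T = (\<Sum>j\<in>J. \<Sum>i<m. e j i * (\<Sum>i'<n. (A1 i i' - A2 i i') * ov j i'))"
    have T1: "T = (\<Sum>l\<in>S. 1 * (\<Sum>j\<in>J. ip m (e j) (u l) * ip n (ov j) (v l)))
              - (\<Sum>t\<in>{..<r}. \<sigma> t * (\<Sum>j\<in>J. ip m (e j) (pp t) * ip n (ov j) (qq t)))"
      unfolding T_def expand_sub unfolding A1_def A2_def expand_sum ..
    have "(\<Sum>l\<in>S. 1 * (\<Sum>j\<in>J. ip m (e j) (u l) * ip n (ov j) (v l))) = (\<Sum>l\<in>S. lam)"
      using aeq Sk unfolding u_def v_def by simp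
    also have "\<dots> = real r * lam" using cardS by simp
    finally have s1: "(\<Sum>l\<in>S. 1 * (\<Sum>j\<in>J. ip m (e j) (u l) * ip n (ov j) (v l))) = real r * lam" .
    have s2: "(\<Sum>t\<in>{..<r}. \<sigma> t * (\<Sum>j\<in>J. ip m (e j) (pp t) * ip n (ov j) (qq t))) \<le> sig"
      unfolding sig_def
    proof (rule sum_mono)
      fix t assume t: "t \<in> {..<r}"
      have "(\<Sum>j\<in>J. ip m (e j) (pp t) * ip n (ov j) (qq t)) \<le> sqrt (ip m (pp t) (pp t)) * sqrt (ip n (qq t) (qq t))"
        by (rule bilin_bound[OF fin orthe ortho])
      also have "\<dots> = 1" using orthp orthq t unfolding orthonormal_on_def by simp
      finally show "\<sigma> t * (\<Sum>j\<in>J. ip m (e j) (pp t) * ip n (ov j) (qq t)) \<le> \<sigma> t"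
        using \<sigma>pos[of t] t r by (simp add: mult_left_le)
    qed
    have Tge: "T \<ge> real r * lam - sig" using T1 s1 s2 by simp
    have "T^2 \<le> real (card J) * (\<Sum>i<m. \<Sum>i'<n. (A1 i i' - A2 i i')^2)"
      unfolding T_def by (rule frob_bound[OF fin orthe ortho])
    also have "\<dots> \<le> real k * frob_sq Y" unfolding frob[symmetric] using cardJ frobnn
      by (simp add: mult_right_mono)
    finally have Tle: "T^2 \<le> real k * frob_sq Y" .
    have "(real r * lam - sig)^2 \<le> T^2" using Tge True by (simp add: power_mono)
    hence "(real r * lam - sig)^2 \<le> real k * frob_sq Y" using Tle by simp
    thus ?thesis unfolding Y_def[symmetric] sig_def[symmetric] using kpos by (simp add: field_simps)
  next
    case False
    define T where "T = (\<Sum>t\<in>{..<r}. \<Sum>i<m. pp t i * (\<Sum>i'<n. (A1 i i' - A2 i i') * qq t i'))"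
    have T1: "T = (\<Sum>l\<in>S. 1 * (\<Sum>t\<in>{..<r}. ip m (pp t) (u l) * ip n (qq t) (v l)))
              - (\<Sum>t'\<in>{..<r}. \<sigma> t' * (\<Sum>t\<in>{..<r}. ip m (pp t) (pp t') * ip n (qq t) (qq t')))"
      unfolding T_def expand_sub unfolding A1_def A2_def expand_sum ..
    have "(\<Sum>l\<in>S. 1 * (\<Sum>t\<in>{..<r}. ip m (pp t) (u l) * ip n (qq t) (v l))) \<le> (\<Sum>l\<in>S. lam)"
    proof (rule sum_mono)
      fix l assume l: "l \<in> S"
      have "(\<Sum>t\<in>{..<r}. ip m (pp t) (u l) * ip n (qq t) (v l)) \<le> sqrt (ip m (u l) (u l)) * sqrt (ip n (v l) (v l))"
        by (rule bilin_bound[OF _ orthp orthq], simp)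
      also have "\<dots> = lam" using beq Sk[OF l] unfolding u_def v_def by simp
      finally show "1 * (\<Sum>t\<in>{..<r}. ip m (pp t) (u l) * ip n (qq t) (v l)) \<le> lam" by simp
    qed
    also have "\<dots> = real r * lam" using cardS by simp
    finally have s1: "(\<Sum>l\<in>S. 1 * (\<Sum>t\<in>{..<r}. ip m (pp t) (u l) * ip n (qq t) (v l))) \<le> real r * lam" .
    have s2: "(\<Sum>t'\<in>{..<r}. \<sigma> t' * (\<Sum>t\<in>{..<r}. ip m (pp t) (pp t') * ip n (qq t) (qq t'))) = sig"
      unfolding sig_def
    proof (rule sum.cong[OF refl])
      fix t' assume t': "t' \<in> {..<r}"
      have "(\<Sum>t\<in>{..<r}. ip m (pp t) (pp t') * ip n (qq t) (qq t')) = (\<Sum>t\<in>{..<r}. if t = t' then 1 else 0)"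
        using orthp orthq t' unfolding orthonormal_on_def by (intro sum.cong, auto)
      also have "\<dots> = 1" using t' by simp
      finally show "\<sigma> t' * (\<Sum>t\<in>{..<r}. ip m (pp t) (pp t') * ip n (qq t) (qq t')) = \<sigma> t'" by simp
    qed
    have Tle0: "T \<le> real r * lam - sig" using T1 s1 s2 by simp
    have "T^2 \<le> real (card {..<r}) * (\<Sum>i<m. \<Sum>i'<n. (A1 i i' - A2 i i')^2)"
      unfolding T_def by (rule frob_bound[OF _ orthp orthq], simp)
    also have "\<dots> \<le> real k * frob_sq Y" unfolding frob[symmetric] using r frobnn
      by (simp add: mult_right_mono)
    finally have Tle: "T^2 \<le> real k * frob_sq Y" .
    have "(real r * lam - sig)^2 \<le> T^2"
    proof -
      have "(real r * lam - sig)^2 = (sig - real r * lam)^2" by (simp add: power2_commute)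
      also have "\<dots> \<le> (- T)^2" using Tle0 False by (intro power_mono, auto)
      finally show ?thesis by simp
    qed
    hence "(real r * lam - sig)^2 \<le> real k * frob_sq Y" using Tle by simp
    thus ?thesis unfolding Y_def[symmetric] sig_def[symmetric] using kpos by (simp add: field_simps)
  qed
qed

theorem theorem4p2:
  fixes m n k :: nat and P Q U V Mstar :: "real mat" and \<sigma> :: "nat \<Rightarrow> real"
  assumes "m \<ge> 1" and "n \<ge> 1" and "k = min m n"
    and "P \<in> carrier_mat m k" and "Q \<in> carrier_mat n k"
    and "transpose_mat P * P = 1\<^sub>m k" and "transpose_mat Q * Q = 1\<^sub>m k"
    and "\<And>i j. i < j \<Longrightarrow> j < k \<Longrightarrow> \<sigma> i > \<sigma> j"
    and "\<And>i. i < k \<Longrightarrow> \<sigma> i > 0"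
    and "Mstar = P * diag_of k \<sigma> * transpose_mat Q"
    and "U \<in> carrier_mat m k" and "V \<in> carrier_mat n k"
    and "\<And>U' V'. U' \<in> carrier_mat m k \<Longrightarrow> V' \<in> carrier_mat n k \<Longrightarrow>
           dropout_loss k Mstar U V \<le> dropout_loss k Mstar U' V'"
  shows "\<forall>r\<in>{1..k}.
           err_E k U V (trunc_approx P Q \<sigma> r) r
             \<ge> (1 / real k) * (real r * (nuclear_norm (U * transpose_mat V) / real k)
                                 - (\<Sum>i<r. \<sigma> i))^2"
proof
  fix r assume r: "r \<in> {1..k}"
  note assms = assms
  have kpos: "k > 0" using assms(1-3) by simp
  have D: "diag_of k \<sigma> \<in> carrier_mat k k" unfolding diag_of_def by simp
  have M: "Mstar \<in> carrier_mat m n" unfolding assms(10)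
    by (rule mult_carrier_mat[OF mult_carrier_mat[OF assms(4) D]], insert assms(5), simp)
  have EX: "\<exists>(J::nat set) e ov. finite J \<and> card J \<le> k \<and> orthonormal_on m J e \<and> orthonormal_on n J ov \<and>
     (\<forall>l<k. (\<Sum>j\<in>J. ip m (e j) (\<lambda>i. U $$ (i,l)) * ip n (ov j) (\<lambda>i. V $$ (i,l)))
              = nuclear_norm (U * transpose_mat V) / real k) \<and>
     (\<forall>l<k. sqrt (ip m (\<lambda>i. U $$ (i,l)) (\<lambda>i. U $$ (i,l))) * sqrt (ip n (\<lambda>i. V $$ (i,l)) (\<lambda>i. V $$ (i,l)))
              = nuclear_norm (U * transpose_mat V) / real k)"
    by (rule structure_min[OF assms(3,1,2,11,12) M], rule assms(13), assumption+)
  show "err_E k U V (trunc_approx P Q \<sigma> r) r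
             \<ge> (1 / real k) * (real r * (nuclear_norm (U * transpose_mat V) / real k) - (\<Sum>i<r. \<sigma> i))^2"
  using EX
  proof (elim exE conjE)
  fix J e ov assume fin: "finite J" and cardJ: "card J \<le> k" and orthe: "orthonormal_on m J e"
    and ortho: "orthonormal_on n J ov"
    and aeq: "\<forall>l<k. (\<Sum>j\<in>J. ip m (e j) (\<lambda>i. U $$ (i,l)) * ip n (ov j) (\<lambda>i. V $$ (i,l)))
              = nuclear_norm (U * transpose_mat V) / real k"
    and beq: "\<forall>l<k. sqrt (ip m (\<lambda>i. U $$ (i,l)) (\<lambda>i. U $$ (i,l))) * sqrt (ip n (\<lambda>i. V $$ (i,l)) (\<lambda>i. V $$ (i,l)))
              = nuclear_norm (U * transpose_mat V) / real k"
  define A where "A = {frob_sq (U * Pi_sel k S * transpose_mat V - trunc_approx P Q \<sigma> r) | S. S \<subseteq> {0..<k} \<and> card S = r}"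
  have finA: "finite A"
  proof -
    have "A \<subseteq> (\<lambda>S. frob_sq (U * Pi_sel k S * transpose_mat V - trunc_approx P Q \<sigma> r)) ` Pow {0..<k}"
      unfolding A_def by auto
    thus ?thesis by (rule finite_subset, simp)
  qed
  have neA: "A \<noteq> {}"
  proof -
    have "frob_sq (U * Pi_sel k {0..<r} * transpose_mat V - trunc_approx P Q \<sigma> r) \<in> A"
      unfolding A_def using r by auto
    thus ?thesis by blast
  qed
  have "\<forall>a\<in>A. (1 / real k) * (real r * (nuclear_norm (U * transpose_mat V) / real k) - (\<Sum>i<r. \<sigma> i))^2 \<le> a"
  proof
    fix a assume "a \<in> A"
    then obtain S where S: "S \<subseteq> {0..<k}" "card S = r"
      and a: "a = frob_sq (U * Pi_sel k S * transpose_mat V - trunc_approx P Q \<sigma> r)"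
      unfolding A_def by blast
    show "(1 / real k) * (real r * (nuclear_norm (U * transpose_mat V) / real k) - (\<Sum>i<r. \<sigma> i))^2 \<le> a"
      unfolding a
    proof (rule final_bound[OF kpos assms(11,12,4,5,6,7,9) fin cardJ orthe ortho aeq beq _ S])
      show "r \<le> k" using r by simp
    qed
  qed
  thus "err_E k U V (trunc_approx P Q \<sigma> r) r
             \<ge> (1 / real k) * (real r * (nuclear_norm (U * transpose_mat V) / real k) - (\<Sum>i<r. \<sigma> i))^2"
    unfolding err_E_def A_def[symmetric] using Min_ge_iff[OF finA neA] by simp
  qed
qed

end
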